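(* Consider a $K$-receiver memoryless packet-erasure broadcast channel with packet size $F$, erasure probabilities $\delta_1,\dots,\delta_K\in[0,1)$, and receiver cache sizes $M_1,\dots,M_K\ge0$, as described in the context. Then \[ C(M_1,\dots,M_K)\le\min_{\emptyset\ne\mathcal S\subseteq\{1,\dots,K\}}\left(F\Big(\sum_{k\in\mathcal S}\frac{1}{1-\delta_k}\Big)^{-1}+\frac{M_{\mathcal S}}{D}\right), \] where $M_{\mathcal S}=\sum_{k\in\mathcal S}M_k$.
   Context: The channel has input alphabet $\{0,1\}^F$ ($F$ a positive integer); given input $x$, receiver $k$ observes $Y_k=x$ with probability $1-\delta_k$ and an erasure symbol $\Delta$ with probability $\delta_k$, memorylessly over time. Library: $D\ge K$ independent messages $W_1,\dots,W_D$, each uniform on $\{1,\dots,\lfloor2^{nR}\rfloor\}$. Caching phase (demands unknown): receiver $k$ stores $V_k=g_k(W_1,\dots,W_D)\in\{1,\dots,\lfloor2^{nM_k}\rfloor\}$. Delivery: an arbitrary demand vector $\mathbf d\in\{1,\dots,D\}^K$ is known to all; the transmitter sends $X^n=f_{\mathbf d}(W_1,\dots,W_D)$; receiver $k$ outputs $\hat W_k=\varphi_{k,\mathbf d}(Y_k^n,V_k)$ as an estimate of $W_{d_k}$. $(R,M_1,\dots,M_K)$ is achievable if for every $\epsilon>0$ there exist $n$ and such functions with worst-case (over all $\mathbf d$) probability that some receiver errs $<\epsilon$; $C(M_1,\dots,M_K)$ is the supremum of such $R$. *)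

theory Defs
  imports Complex_Main "HOL-Library.FuncSet"
begin

(* Receivers are indexed 1..K, files 1..D, time slots 0..<n.
   A channel input symbol in {0,1}^F is a bool list of length F;
   a channel output is an option: None = erasure symbol, Some x = x. *)

definition msg_count :: "nat \<Rightarrow> real \<Rightarrow> nat" where
  "msg_count n R = nat \<lfloor>2 powr (real n * R)\<rfloor>"

definition library :: "nat \<Rightarrow> nat \<Rightarrow> real \<Rightarrow> (nat \<Rightarrow> nat) set" where
  "library D n R = PiE {1..D} (\<lambda>_. {1..msg_count n R})"

definition demands :: "nat \<Rightarrow> nat \<Rightarrow> (nat \<Rightarrow> nat) set" where
  "demands K D = PiE {1..K} (\<lambda>_. {1..D})"

(* erasure patterns: e (t,k) = True iff receiver k sees an erasure at time t *)
definition erasure_patterns :: "nat \<Rightarrow> nat \<Rightarrow> (nat \<times> nat \<Rightarrow> bool) set" where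
  "erasure_patterns K n = PiE ({..<n} \<times> {1..K}) (\<lambda>_. UNIV)"

definition pattern_prob :: "(nat \<Rightarrow> real) \<Rightarrow> nat \<Rightarrow> nat \<Rightarrow> (nat \<times> nat \<Rightarrow> bool) \<Rightarrow> real" where
  "pattern_prob \<delta> K n e =
     (\<Prod>p\<in>{..<n} \<times> {1..K}. if e p then \<delta> (snd p) else 1 - \<delta> (snd p))"

definition channel_output ::
  "nat \<Rightarrow> (nat \<Rightarrow> bool list) \<Rightarrow> (nat \<times> nat \<Rightarrow> bool) \<Rightarrow> nat \<Rightarrow> (nat \<Rightarrow> bool list option)" where
  "channel_output n x e k = (\<lambda>t. if t < n \<and> \<not> e (t, k) then Some (x t) else None)"

(* g k w : cache content V_k; f d w : transmitted sequence X^n;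
   phi k d y v : estimate of receiver k of W_{d_k} *)
definition valid_code ::
  "nat \<Rightarrow> nat \<Rightarrow> nat \<Rightarrow> (nat \<Rightarrow> real) \<Rightarrow> nat \<Rightarrow> real
   \<Rightarrow> (nat \<Rightarrow> (nat \<Rightarrow> nat) \<Rightarrow> nat)
   \<Rightarrow> ((nat \<Rightarrow> nat) \<Rightarrow> (nat \<Rightarrow> nat) \<Rightarrow> nat \<Rightarrow> bool list) \<Rightarrow> bool" where
  "valid_code F K D M n R g f \<longleftrightarrow>
     (\<forall>k\<in>{1..K}. \<forall>w\<in>library D n R. g k w \<in> {1..nat \<lfloor>2 powr (real n * M k)\<rfloor>}) \<and>
     (\<forall>d\<in>demands K D. \<forall>w\<in>library D n R. \<forall>t<n. length (f d w t) = F)"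

definition error_prob ::
  "(nat \<Rightarrow> real) \<Rightarrow> nat \<Rightarrow> nat \<Rightarrow> nat \<Rightarrow> real
   \<Rightarrow> (nat \<Rightarrow> (nat \<Rightarrow> nat) \<Rightarrow> nat)
   \<Rightarrow> ((nat \<Rightarrow> nat) \<Rightarrow> (nat \<Rightarrow> nat) \<Rightarrow> nat \<Rightarrow> bool list)
   \<Rightarrow> (nat \<Rightarrow> (nat \<Rightarrow> nat) \<Rightarrow> (nat \<Rightarrow> bool list option) \<Rightarrow> nat \<Rightarrow> nat)
   \<Rightarrow> (nat \<Rightarrow> nat) \<Rightarrow> real" where
  "error_prob \<delta> K D n R g f \<phi> d =
     (1 / real (card (library D n R))) *
     (\<Sum>w\<in>library D n R. \<Sum>e\<in>erasure_patterns K n.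
        pattern_prob \<delta> K n e *
        (if \<exists>k\<in>{1..K}. \<phi> k d (channel_output n (f d w) e k) (g k w) \<noteq> w (d k)
         then 1 else 0))"

definition achievable ::
  "nat \<Rightarrow> (nat \<Rightarrow> real) \<Rightarrow> nat \<Rightarrow> nat \<Rightarrow> (nat \<Rightarrow> real) \<Rightarrow> real \<Rightarrow> bool" where
  "achievable F \<delta> K D M R \<longleftrightarrow>
     (\<forall>\<epsilon>>0. \<forall>N. \<exists>n\<ge>N. \<exists>g f \<phi>. valid_code F K D M n R g f \<and>
        (\<forall>d\<in>demands K D. error_prob \<delta> K D n R g f \<phi> d < \<epsilon>))"

definition capacity ::
  "nat \<Rightarrow> (nat \<Rightarrow> real) \<Rightarrow> nat \<Rightarrow> nat \<Rightarrow> (nat \<Rightarrow> real) \<Rightarrow> real" where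
  "capacity F \<delta> K D M = Sup {R. achievable F \<delta> K D M R}"

end

theory Submission
  imports Defs
begin

locale fdist =
  fixes Om :: "'a set" and p :: "'a \<Rightarrow> real"
  assumes fin: "finite Om" and nonneg: "\<And>w. w \<in> Om \<Longrightarrow> 0 \<le> p w"
    and total: "sum p Om = 1"
begin

definition Pr :: "('a \<Rightarrow> 'b) \<Rightarrow> 'b \<Rightarrow> real" where
  "Pr X x = sum p {w \<in> Om. X w = x}"

definition ent :: "('a \<Rightarrow> 'b) \<Rightarrow> real" where
  "ent X = - (\<Sum>w\<in>Om. p w * ln (Pr X (X w)))"

definition cent :: "('a \<Rightarrow> 'b) \<Rightarrow> ('a \<Rightarrow> 'c) \<Rightarrow> real" where
  "cent X Y = ent (\<lambda>w. (X w, Y w)) - ent Y"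

lemma Pr_nonneg: "0 \<le> Pr X x"
  unfolding Pr_def by (rule sum_nonneg) (auto intro: nonneg)

lemma Pr_ge: "w \<in> Om \<Longrightarrow> p w \<le> Pr X (X w)"
  unfolding Pr_def using fin nonneg
  by (intro member_le_sum) auto

lemma Pr_pos: "w \<in> Om \<Longrightarrow> 0 < p w \<Longrightarrow> 0 < Pr X (X w)"
  using Pr_ge[of w X] by linarith

lemma Pr_mono:
  assumes "\<And>w'. w' \<in> Om \<Longrightarrow> X w' = X w \<Longrightarrow> Y w' = Y w"
  shows "Pr X (X w) \<le> Pr Y (Y w)"
  unfolding Pr_def using fin nonneg assms
  by (intro sum_mono2) auto

lemma Pr_le1: "Pr X x \<le> 1"
proof -
  have "Pr X x \<le> sum p Om" unfolding Pr_def using fin nonneg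
    by (intro sum_mono2) auto
  then show ?thesis using total by simp
qed

lemma Pr_cong:
  assumes "\<And>w'. w' \<in> Om \<Longrightarrow> (X w' = X w) = (Y w' = Y w)"
  shows "Pr X (X w) = Pr Y (Y w)"
  unfolding Pr_def using assms by (intro sum.cong) auto

lemma ent_cong:
  assumes "\<And>w w'. w \<in> Om \<Longrightarrow> w' \<in> Om \<Longrightarrow> (X w' = X w) = (Y w' = Y w)"
  shows "ent X = ent Y"
  unfolding ent_def
proof -
  have "(\<Sum>w\<in>Om. p w * ln (Pr X (X w))) = (\<Sum>w\<in>Om. p w * ln (Pr Y (Y w)))"
  proof (rule sum.cong)
    fix w assume "w \<in> Om"
    then have "Pr X (X w) = Pr Y (Y w)" using assms by (intro Pr_cong) auto
    then show "p w * ln (Pr X (X w)) = p w * ln (Pr Y (Y w))" by simp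
  qed simp
  then show "- (\<Sum>w\<in>Om. p w * ln (Pr X (X w))) = - (\<Sum>w\<in>Om. p w * ln (Pr Y (Y w)))" by simp
qed

lemma fiber_sum:
  "(\<Sum>w\<in>Om. p w * h (X w)) = (\<Sum>x\<in>X ` Om. Pr X x * h x)"
proof -
  have "(\<Sum>w\<in>Om. p w * h (X w)) = (\<Sum>x\<in>X ` Om. \<Sum>w\<in>{w \<in> Om. X w = x}. p w * h (X w))"
    by (rule sum.image_gen[OF fin])
  also have "\<dots> = (\<Sum>x\<in>X ` Om. Pr X x * h x)"
    unfolding Pr_def sum_distrib_right by (intro sum.cong) auto
  finally show ?thesis .
qed

lemma sum_Pr: "(\<Sum>x\<in>X ` Om. Pr X x) = 1"
  using fiber_sum[of "\<lambda>_. 1" X] total by simp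

lemma gibbs:
  assumes Q0: "\<And>v. 0 \<le> Q v" and Qp: "\<And>w. w \<in> Om \<Longrightarrow> 0 < p w \<Longrightarrow> 0 < Q (V w)"
  shows "(\<Sum>w\<in>Om. p w * ln (Q (V w) / Pr V (V w))) \<le> (\<Sum>v\<in>V ` Om. Q v) - 1"
proof -
  have "(\<Sum>w\<in>Om. p w * ln (Q (V w) / Pr V (V w))) \<le> (\<Sum>w\<in>Om. p w * (Q (V w) / Pr V (V w)) - p w)"
  proof (rule sum_mono)
    fix w assume w: "w \<in> Om"
    show "p w * ln (Q (V w) / Pr V (V w)) \<le> p w * (Q (V w) / Pr V (V w)) - p w"
    proof (cases "p w = 0")
      case True then show ?thesis by simp
    next
      case False
      then have pp: "0 < p w" using nonneg[OF w] by simp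
      have "0 < Q (V w) / Pr V (V w)" using Qp[OF w pp] Pr_pos[of w V, OF w pp] by simp
      then have "ln (Q (V w) / Pr V (V w)) \<le> Q (V w) / Pr V (V w) - 1" by (rule ln_le_minus_one)
      then have "p w * ln (Q (V w) / Pr V (V w)) \<le> p w * (Q (V w) / Pr V (V w) - 1)"
        using pp by (intro mult_left_mono) auto
      then show ?thesis by (simp add: algebra_simps)
    qed
  qed
  also have "\<dots> = (\<Sum>w\<in>Om. p w * (Q (V w) / Pr V (V w))) - 1"
    using total by (simp add: sum_subtractf)
  also have "(\<Sum>w\<in>Om. p w * (Q (V w) / Pr V (V w))) = (\<Sum>v\<in>V ` Om. Pr V v * (Q v / Pr V v))"
    by (rule fiber_sum)
  also have "\<dots> \<le> (\<Sum>v\<in>V ` Om. Q v)"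
  proof (rule sum_mono)
    fix v show "Pr V v * (Q v / Pr V v) \<le> Q v"
      using Q0[of v] by (cases "Pr V v = 0") auto
  qed
  finally show ?thesis by simp
qed

lemma ent_const: "ent (\<lambda>_. c) = 0"
proof -
  have "Pr (\<lambda>_. c) c = 1" unfolding Pr_def using total by simp
  then show ?thesis unfolding ent_def by simp
qed

lemma cent_formula:
  "cent X Y = - (\<Sum>w\<in>Om. p w * ln (Pr (\<lambda>w. (X w, Y w)) (X w, Y w) / Pr Y (Y w)))"
proof -
  have "(\<Sum>w\<in>Om. p w * ln (Pr (\<lambda>w. (X w, Y w)) (X w, Y w) / Pr Y (Y w))) =
        (\<Sum>w\<in>Om. p w * ln (Pr (\<lambda>w. (X w, Y w)) (X w, Y w)) - p w * ln (Pr Y (Y w)))"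
  proof (rule sum.cong)
    fix w assume w: "w \<in> Om"
    show "p w * ln (Pr (\<lambda>w. (X w, Y w)) (X w, Y w) / Pr Y (Y w)) =
        p w * ln (Pr (\<lambda>w. (X w, Y w)) (X w, Y w)) - p w * ln (Pr Y (Y w))"
    proof (cases "p w = 0")
      case True then show ?thesis by simp
    next
      case False
      then have pp: "0 < p w" using nonneg[OF w] by simp
      have a: "0 < Pr (\<lambda>w. (X w, Y w)) (X w, Y w)" using Pr_pos[OF w pp, of "\<lambda>w. (X w, Y w)"] by simp
      have b: "0 < Pr Y (Y w)" using Pr_pos[of w Y, OF w pp] by simp
      show ?thesis using a b by (simp add: ln_div algebra_simps)
    qed
  qed simp
  then show ?thesis unfolding cent_def ent_def by (simp add: sum_subtractf)
qed

lemma cent_cong: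
  assumes "\<And>w w'. w \<in> Om \<Longrightarrow> w' \<in> Om \<Longrightarrow> (X w' = X w \<and> Y w' = Y w) = (X' w' = X' w \<and> Y' w' = Y' w)"
    and "\<And>w w'. w \<in> Om \<Longrightarrow> w' \<in> Om \<Longrightarrow> (Y w' = Y w) = (Y' w' = Y' w)"
  shows "cent X Y = cent X' Y'"
  unfolding cent_def
  using ent_cong[of "\<lambda>w. (X w, Y w)" "\<lambda>w. (X' w, Y' w)"] ent_cong[of Y Y'] assms by auto

lemma cent_nonneg: "0 \<le> cent X Y"
proof -
  have "(\<Sum>w\<in>Om. p w * ln (Pr (\<lambda>w. (X w, Y w)) (X w, Y w) / Pr Y (Y w))) \<le> 0"
  proof (rule sum_nonpos)
    fix w assume w: "w \<in> Om"
    show "p w * ln (Pr (\<lambda>w. (X w, Y w)) (X w, Y w) / Pr Y (Y w)) \<le> 0"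
    proof (cases "p w = 0")
      case True then show ?thesis by simp
    next
      case False
      then have pp: "0 < p w" using nonneg[OF w] by simp
      have a: "0 < Pr (\<lambda>w. (X w, Y w)) (X w, Y w)" using Pr_pos[OF w pp, of "\<lambda>w. (X w, Y w)"] by simp
      have b: "Pr (\<lambda>w. (X w, Y w)) (X w, Y w) \<le> Pr Y (Y w)"
        using Pr_mono[of "\<lambda>w. (X w, Y w)" w Y] by auto
      have "ln (Pr (\<lambda>w. (X w, Y w)) (X w, Y w) / Pr Y (Y w)) \<le> 0"
        using a b by (simp add: ln_div)
      then show ?thesis using pp by (simp add: mult_nonneg_nonpos)
    qed
  qed
  then show ?thesis using cent_formula[of X Y] by simp
qed


lemma cent_sum:
  "cent X Y = (\<Sum>w\<in>Om. p w * (ln (Pr Y (Y w)) - ln (Pr (\<lambda>w. (X w, Y w)) (X w, Y w))))"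
  unfolding cent_def ent_def by (simp add: sum_subtractf algebra_simps)

lemma fiber_Pr:
  "(\<Sum>x\<in>X ` {w' \<in> Om. Z w' = z}. Pr (\<lambda>w. (Z w, X w)) (z, x)) = Pr Z z"
proof -
  have "Pr Z z = (\<Sum>x\<in>X ` {w' \<in> Om. Z w' = z}. sum p {w \<in> {w' \<in> Om. Z w' = z}. X w = x})"
    unfolding Pr_def using fin by (intro sum.image_gen) auto
  also have "\<dots> = (\<Sum>x\<in>X ` {w' \<in> Om. Z w' = z}. Pr (\<lambda>w. (Z w, X w)) (z, x))"
    unfolding Pr_def by (intro sum.cong) (auto intro: sum.cong)
  finally show ?thesis by simp
qed

lemma cent_le_fibercard:
  fixes X :: "'a \<Rightarrow> 'x" and Z :: "'a \<Rightarrow> 'z"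
  shows "cent X Z \<le> (\<Sum>w\<in>Om. p w * ln (real (card (X ` {w' \<in> Om. Z w' = Z w}))))"
proof -
  define N where "N z = real (card (X ` {w' \<in> Om. Z w' = z}))" for z
  define V where "V w = (Z w, X w)" for w
  define Q where "Q v = Pr Z (fst v) / N (fst v)" for v :: "'z \<times> 'x"
  have Npos: "w \<in> Om \<Longrightarrow> 0 < N (Z w)" for w
    unfolding N_def using fin by (auto simp: card_gt_0_iff)
  have g: "(\<Sum>w\<in>Om. p w * ln (Q (V w) / Pr V (V w))) \<le> (\<Sum>v\<in>V ` Om. Q v) - 1"
  proof (rule gibbs)
    show "0 \<le> Q v" for v unfolding Q_def N_def using Pr_nonneg[of Z "fst v"] by simp
    show "0 < Q (V w)" if "w \<in> Om" "0 < p w" for w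
      unfolding Q_def V_def using Pr_pos[of w Z, OF that] Npos[OF that(1)] by simp
  qed
  have VOm: "V ` Om = Sigma (Z ` Om) (\<lambda>z. X ` {w' \<in> Om. Z w' = z})"
    unfolding V_def by (auto simp: image_iff) (metis)
  have "(\<Sum>v\<in>V ` Om. Q v) = (\<Sum>z\<in>Z ` Om. \<Sum>x\<in>X ` {w' \<in> Om. Z w' = z}. Pr Z z / N z)"
    unfolding VOm Q_def using fin by (subst sum.Sigma) (auto intro!: sum.cong)
  also have "\<dots> = (\<Sum>z\<in>Z ` Om. Pr Z z)"
  proof (rule sum.cong)
    fix z assume "z \<in> Z ` Om"
    then have "0 < N z" unfolding N_def using fin by (auto simp: card_gt_0_iff)
    then show "(\<Sum>x\<in>X ` {w' \<in> Om. Z w' = z}. Pr Z z / N z) = Pr Z z"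
      by (simp add: N_def)
  qed simp
  also have "\<dots> = 1" by (rule sum_Pr)
  finally have s1: "(\<Sum>v\<in>V ` Om. Q v) = 1" .
  have "(\<Sum>w\<in>Om. p w * ln (Q (V w) / Pr V (V w))) =
        cent X Z - (\<Sum>w\<in>Om. p w * ln (N (Z w)))"
    unfolding cent_sum sum_subtractf[symmetric]
  proof (rule sum.cong)
    fix w assume w: "w \<in> Om"
    show "p w * ln (Q (V w) / Pr V (V w)) =
      p w * (ln (Pr Z (Z w)) - ln (Pr (\<lambda>w. (X w, Z w)) (X w, Z w))) - p w * ln (N (Z w))"
    proof (cases "p w = 0")
      case True then show ?thesis by simp
    next
      case False
      then have pp: "0 < p w" using nonneg[OF w] by simp
      have e: "Pr V (V w) = Pr (\<lambda>w. (X w, Z w)) (X w, Z w)"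
        unfolding V_def by (rule Pr_cong) auto
      have a: "0 < Pr (\<lambda>w. (X w, Z w)) (X w, Z w)" using Pr_pos[of w "\<lambda>w. (X w, Z w)", OF w pp] by simp
      have b: "0 < Pr Z (Z w)" using Pr_pos[of w Z, OF w pp] by simp
      have c: "0 < N (Z w)" using Npos[OF w] .
      show ?thesis unfolding e using a b c
        by (simp add: Q_def V_def ln_div ln_mult algebra_simps)
    qed
  qed simp
  with g s1 show ?thesis unfolding N_def by simp
qed

lemma cent_le_card: "cent X Z \<le> ln (real (card (X ` Om)))"
proof -
  have "cent X Z \<le> (\<Sum>w\<in>Om. p w * ln (real (card (X ` {w' \<in> Om. Z w' = Z w}))))"
    by (rule cent_le_fibercard)
  also have "\<dots> \<le> (\<Sum>w\<in>Om. p w * ln (real (card (X ` Om))))"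
  proof (rule sum_mono)
    fix w assume w: "w \<in> Om"
    have "0 < card (X ` {w' \<in> Om. Z w' = Z w})" using fin w by (auto simp: card_gt_0_iff)
    moreover have "card (X ` {w' \<in> Om. Z w' = Z w}) \<le> card (X ` Om)"
      using fin by (intro card_mono) auto
    ultimately have "ln (real (card (X ` {w' \<in> Om. Z w' = Z w}))) \<le> ln (real (card (X ` Om)))"
      by simp
    then show "p w * ln (real (card (X ` {w' \<in> Om. Z w' = Z w}))) \<le> p w * ln (real (card (X ` Om)))"
      using nonneg[OF w] by (intro mult_left_mono) auto
  qed
  also have "\<dots> = ln (real (card (X ` Om)))"
    using total by (simp add: sum_distrib_right[symmetric])
  finally show ?thesis .
qed

lemma ent_as_cent: "ent X = cent X (\<lambda>_. ())"
  unfolding cent_def ent_const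
  by (simp add: ent_cong[of X "\<lambda>w. (X w, ())"])

lemma ent_le_card: "ent X \<le> ln (real (card (X ` Om)))"
  using cent_le_card[of X "\<lambda>_. ()"] by (simp add: ent_as_cent)

lemma ent_nonneg: "0 \<le> ent X"
  using cent_nonneg[of X "\<lambda>_. ()"] by (simp add: ent_as_cent)


lemma cond_reduce:
  fixes X :: "'a \<Rightarrow> 'x" and Y :: "'a \<Rightarrow> 'y" and Z :: "'a \<Rightarrow> 'z"
  shows "cent X (\<lambda>w. (Y w, Z w)) \<le> cent X Z"
proof -
  define V where "V w = (Z w, X w, Y w)" for w
  define Q where "Q v = Pr (\<lambda>w. (Z w, X w)) (fst v, fst (snd v)) *
     Pr (\<lambda>w. (Z w, Y w)) (fst v, snd (snd v)) / Pr Z (fst v)" for v :: "'z \<times> 'x \<times> 'y"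
  have g: "(\<Sum>w\<in>Om. p w * ln (Q (V w) / Pr V (V w))) \<le> (\<Sum>v\<in>V ` Om. Q v) - 1"
  proof (rule gibbs)
    show "0 \<le> Q v" for v unfolding Q_def
      using Pr_nonneg[of Z "fst v"] Pr_nonneg[of "\<lambda>w. (Z w, X w)"] Pr_nonneg[of "\<lambda>w. (Z w, Y w)"]
      by simp
    show "0 < Q (V w)" if "w \<in> Om" "0 < p w" for w
      unfolding Q_def V_def using Pr_pos[of w Z, OF that] Pr_pos[of w "\<lambda>w. (Z w, X w)", OF that]
        Pr_pos[of w "\<lambda>w. (Z w, Y w)", OF that] by simp
  qed
  define Xz where "Xz z = X ` {w' \<in> Om. Z w' = z}" for z
  define Yz where "Yz z = Y ` {w' \<in> Om. Z w' = z}" for z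
  have sub: "V ` Om \<subseteq> Sigma (Z ` Om) (\<lambda>z. Xz z \<times> Yz z)"
    unfolding V_def Xz_def Yz_def by auto
  have finS: "finite (Sigma (Z ` Om) (\<lambda>z. Xz z \<times> Yz z))"
    unfolding Xz_def Yz_def using fin by auto
  have Q0: "0 \<le> Q v" for v unfolding Q_def
      using Pr_nonneg[of Z "fst v"] Pr_nonneg[of "\<lambda>w. (Z w, X w)"] Pr_nonneg[of "\<lambda>w. (Z w, Y w)"]
      by simp
  have "(\<Sum>v\<in>V ` Om. Q v) \<le> (\<Sum>v\<in>Sigma (Z ` Om) (\<lambda>z. Xz z \<times> Yz z). Q v)"
    using sub finS Q0 by (intro sum_mono2) auto
  also have "\<dots> = (\<Sum>z\<in>Z ` Om. \<Sum>xy\<in>Xz z \<times> Yz z. Q (z, xy))"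
    using finS fin unfolding Xz_def Yz_def by (subst sum.Sigma) (auto intro!: sum.cong)
  also have "\<dots> = (\<Sum>z\<in>Z ` Om. (\<Sum>x\<in>Xz z. Pr (\<lambda>w. (Z w, X w)) (z, x)) *
        (\<Sum>y\<in>Yz z. Pr (\<lambda>w. (Z w, Y w)) (z, y)) / Pr Z z)"
    unfolding Q_def by (simp add: sum_product sum.cartesian_product sum_divide_distrib split_def)
  also have "\<dots> = (\<Sum>z\<in>Z ` Om. Pr Z z)"
    unfolding Xz_def Yz_def fiber_Pr by (intro sum.cong) auto
  also have "\<dots> = 1" by (rule sum_Pr)
  finally have s1: "(\<Sum>v\<in>V ` Om. Q v) \<le> 1" .
  have "(\<Sum>w\<in>Om. p w * ln (Q (V w) / Pr V (V w))) = cent X (\<lambda>w. (Y w, Z w)) - cent X Z"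
    unfolding cent_sum sum_subtractf[symmetric]
  proof (rule sum.cong)
    fix w assume w: "w \<in> Om"
    show "p w * ln (Q (V w) / Pr V (V w)) =
      p w * (ln (Pr (\<lambda>w. (Y w, Z w)) (Y w, Z w)) - ln (Pr (\<lambda>w. (X w, Y w, Z w)) (X w, Y w, Z w))) -
      p w * (ln (Pr Z (Z w)) - ln (Pr (\<lambda>w. (X w, Z w)) (X w, Z w)))"
    proof (cases "p w = 0")
      case True then show ?thesis by simp
    next
      case False
      then have pp: "0 < p w" using nonneg[OF w] by simp
      have e1: "Pr V (V w) = Pr (\<lambda>w. (X w, Y w, Z w)) (X w, Y w, Z w)"
        unfolding V_def by (rule Pr_cong) auto
      have e2: "Pr (\<lambda>w. (Z w, X w)) (Z w, X w) = Pr (\<lambda>w. (X w, Z w)) (X w, Z w)"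
        by (rule Pr_cong) auto
      have e3: "Pr (\<lambda>w. (Z w, Y w)) (Z w, Y w) = Pr (\<lambda>w. (Y w, Z w)) (Y w, Z w)"
        by (rule Pr_cong) auto
      have a: "0 < Pr (\<lambda>w. (X w, Z w)) (X w, Z w)" using Pr_pos[of w "\<lambda>w. (X w, Z w)", OF w pp] by simp
      have b: "0 < Pr Z (Z w)" using Pr_pos[of w Z, OF w pp] by simp
      have c: "0 < Pr (\<lambda>w. (Y w, Z w)) (Y w, Z w)" using Pr_pos[of w "\<lambda>w. (Y w, Z w)", OF w pp] by simp
      have d: "0 < Pr (\<lambda>w. (X w, Y w, Z w)) (X w, Y w, Z w)"
        using Pr_pos[of w "\<lambda>w. (X w, Y w, Z w)", OF w pp] by simp
      have "Q (V w) = Pr (\<lambda>w. (X w, Z w)) (X w, Z w) * Pr (\<lambda>w. (Y w, Z w)) (Y w, Z w) / Pr Z (Z w)"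
        unfolding Q_def V_def using e2 e3 by simp
      then show ?thesis unfolding e1 using a b c d
        by (simp add: ln_div ln_mult algebra_simps)
    qed
  qed simp
  with g s1 show ?thesis by simp
qed

lemma cent_mono_fun:
  assumes "\<And>w. w \<in> Om \<Longrightarrow> Z w = h (Z' w)"
  shows "cent X Z' \<le> cent X Z"
proof -
  have "cent X Z' = cent X (\<lambda>w. (Z' w, Z w))"
    using assms by (intro cent_cong) auto
  also have "\<dots> \<le> cent X Z" by (rule cond_reduce)
  finally show ?thesis .
qed

lemma fano:
  fixes X :: "'a \<Rightarrow> 'x" and Z :: "'a \<Rightarrow> 'z"
  shows "cent X Z \<le> ln 2 + sum p {w \<in> Om. X w \<noteq> phi (Z w)} * ln (real (card (X ` Om)))"
proof -
  define E where "E w = (X w \<noteq> phi (Z w))" for w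
  have split: "cent X Z = cent X (\<lambda>w. (E w, Z w)) + cent E Z"
  proof -
    have "ent (\<lambda>w. (X w, Z w)) = ent (\<lambda>w. (X w, E w, Z w))"
      unfolding E_def by (rule ent_cong) auto
    then show ?thesis unfolding cent_def by simp
  qed
  have cE: "cent E Z \<le> ln 2"
  proof -
    have "card (E ` Om) \<le> card (UNIV :: bool set)" by (intro card_mono) auto
    then have "card (E ` Om) \<le> 2" by simp
    moreover have "0 < card (E ` Om)" using fin total by (auto simp: card_gt_0_iff)
    ultimately have "ln (real (card (E ` Om))) \<le> ln 2" by simp
    then show ?thesis using cent_le_card[of E Z] by simp
  qed
  define N where "N = real (card (X ` Om))"
  have "cent X (\<lambda>w. (E w, Z w)) \<le>
      (\<Sum>w\<in>Om. p w * ln (real (card (X ` {w' \<in> Om. (E w', Z w') = (E w, Z w)}))))"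
    by (rule cent_le_fibercard)
  also have "\<dots> \<le> (\<Sum>w\<in>Om. p w * (if E w then ln N else 0))"
  proof (rule sum_mono)
    fix w assume w: "w \<in> Om"
    have pos: "0 < card (X ` {w' \<in> Om. (E w', Z w') = (E w, Z w)})" using fin w by (auto simp: card_gt_0_iff)
    have "ln (real (card (X ` {w' \<in> Om. (E w', Z w') = (E w, Z w)}))) \<le> (if E w then ln N else 0)"
    proof (cases "E w")
      case True
      have "card (X ` {w' \<in> Om. (E w', Z w') = (E w, Z w)}) \<le> card (X ` Om)"
        using fin by (intro card_mono) auto
      then show ?thesis using True pos by (simp add: N_def)
    next
      case False
      have ss: "X ` {w' \<in> Om. (E w', Z w') = (E w, Z w)} \<subseteq> {phi (Z w)}"
        using False unfolding E_def by auto
      have "card (X ` {w' \<in> Om. (E w', Z w') = (E w, Z w)}) \<le> 1"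
        using card_mono[OF _ ss] by simp
      then have "card (X ` {w' \<in> Om. (E w', Z w') = (E w, Z w)}) = 1" using pos by simp
      then show ?thesis using False by simp
    qed
    then show "p w * ln (real (card (X ` {w' \<in> Om. (E w', Z w') = (E w, Z w)}))) \<le>
        p w * (if E w then ln N else 0)"
      using nonneg[OF w] by (intro mult_left_mono) auto
  qed
  also have "\<dots> = sum p {w \<in> Om. E w} * ln N"
  proof -
    have "(\<Sum>w\<in>Om. p w * (if E w then ln N else 0)) = (\<Sum>w\<in>Om. if E w then p w * ln N else 0)"
      by (intro sum.cong) auto
    also have "\<dots> = (\<Sum>w\<in>{w \<in> Om. E w}. p w * ln N)"
      using fin by (rule sum.inter_filter[symmetric])
    finally show ?thesis by (simp add: sum_distrib_right)
  qed
  finally show ?thesis using split cE unfolding E_def N_def by simp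
qed

end

definition Exs :: "real \<Rightarrow> 'a set \<Rightarrow> ('a set \<Rightarrow> real) \<Rightarrow> real" where
  "Exs q T \<phi> = (\<Sum>A\<in>Pow T. q ^ card A * (1 - q) ^ card (T - A) * \<phi> A)"

lemma Exs_empty: "Exs q {} \<phi> = \<phi> {}"
  unfolding Exs_def by simp

lemma Exs_insert:
  assumes "finite T" "a \<notin> T"
  shows "Exs q (insert a T) \<phi> = q * Exs q T (\<lambda>A. \<phi> (insert a A)) + (1 - q) * Exs q T \<phi>"
proof -
  have disj: "Pow T \<inter> insert a ` Pow T = {}" using assms by auto
  have inj: "inj_on (insert a) (Pow T)"
    using assms unfolding inj_on_def by (metis Pow_iff insert_ident subset_iff)
  have fP: "finite (Pow T)" using assms by simp
  have "Exs q (insert a T) \<phi> =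
      (\<Sum>A\<in>Pow T. q ^ card A * (1 - q) ^ card (insert a T - A) * \<phi> A) +
      (\<Sum>A\<in>insert a ` Pow T. q ^ card A * (1 - q) ^ card (insert a T - A) * \<phi> A)"
    unfolding Exs_def Pow_insert using fP disj by (intro sum.union_disjoint) auto
  also have "(\<Sum>A\<in>insert a ` Pow T. q ^ card A * (1 - q) ^ card (insert a T - A) * \<phi> A) =
      (\<Sum>A\<in>Pow T. q ^ card (insert a A) * (1 - q) ^ card (insert a T - insert a A) * \<phi> (insert a A))"
    using inj by (simp add: sum.reindex)
  also have "\<dots> = q * Exs q T (\<lambda>A. \<phi> (insert a A))"
    unfolding Exs_def sum_distrib_left
  proof (rule sum.cong)
    fix A assume A: "A \<in> Pow T"
    then have "finite A" "a \<notin> A" using assms finite_subset by auto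
    then have "card (insert a A) = Suc (card A)" by simp
    moreover have "insert a T - insert a A = T - A" using assms A by auto
    ultimately show "q ^ card (insert a A) * (1 - q) ^ card (insert a T - insert a A) * \<phi> (insert a A) =
         q * (q ^ card A * (1 - q) ^ card (T - A) * \<phi> (insert a A))" by simp
  qed simp
  also have "(\<Sum>A\<in>Pow T. q ^ card A * (1 - q) ^ card (insert a T - A) * \<phi> A) = (1 - q) * Exs q T \<phi>"
    unfolding Exs_def sum_distrib_left
  proof (rule sum.cong)
    fix A assume A: "A \<in> Pow T"
    have "insert a T - A = insert a (T - A)" using assms A by auto
    moreover have "finite (T - A)" "a \<notin> T - A" using assms by auto
    ultimately have "card (insert a T - A) = Suc (card (T - A))" by simp
    then show "q ^ card A * (1 - q) ^ card (insert a T - A) * \<phi> A =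
         (1 - q) * (q ^ card A * (1 - q) ^ card (T - A) * \<phi> A)" by simp
  qed simp
  finally show ?thesis by simp
qed

lemma Exs_const: "finite T \<Longrightarrow> Exs q T (\<lambda>_. c) = c"
proof (induction T rule: finite_induct)
  case empty then show ?case by (simp add: Exs_empty)
next
  case (insert a T) then show ?case by (simp add: Exs_insert algebra_simps)
qed

lemma Exs_add: "Exs q T (\<lambda>A. f A + g A) = Exs q T f + Exs q T g"
  unfolding Exs_def by (simp add: algebra_simps sum.distrib)

lemma Exs_diff: "Exs q T (\<lambda>A. f A - g A) = Exs q T f - Exs q T g"
  unfolding Exs_def by (simp add: algebra_simps sum_subtractf)

lemma Exs_cmult: "Exs q T (\<lambda>A. c * f A) = c * Exs q T f"
  unfolding Exs_def by (simp add: algebra_simps sum_distrib_left)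

lemma Exs_cong: "(\<And>A. A \<subseteq> T \<Longrightarrow> f A = g A) \<Longrightarrow> Exs q T f = Exs q T g"
  unfolding Exs_def by (intro sum.cong) auto

lemma Exs_mono:
  assumes "0 \<le> q" "q \<le> 1" "\<And>A. A \<subseteq> T \<Longrightarrow> f A \<le> g A"
  shows "Exs q T f \<le> Exs q T g"
  unfolding Exs_def using assms by (intro sum_mono mult_left_mono) auto

lemma Exs_nonneg:
  assumes "0 \<le> q" "q \<le> 1" "\<And>A. A \<subseteq> T \<Longrightarrow> 0 \<le> f A"
  shows "0 \<le> Exs q T f"
  unfolding Exs_def using assms by (intro sum_nonneg mult_nonneg_nonneg) auto

lemma Exs_le_const:
  assumes "finite T" "0 \<le> q" "q \<le> 1" "\<And>A. A \<subseteq> T \<Longrightarrow> f A \<le> c"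
  shows "Exs q T f \<le> c"
  using Exs_mono[of q T f "\<lambda>_. c"] Exs_const[of T q c] assms by simp

lemma Exs_antitone_q:
  assumes "finite T" "0 \<le> q" "q \<le> q'" "q' \<le> 1"
    and "\<And>A B. A \<subseteq> B \<Longrightarrow> B \<subseteq> T \<Longrightarrow> f B \<le> f A"
  shows "Exs q' T f \<le> Exs q T f"
  using assms(1,5)
proof (induction T arbitrary: f rule: finite_induct)
  case empty then show ?case by (simp add: Exs_empty)
next
  case (insert a T)
  define fa where "fa = (\<lambda>A. f (insert a A))"
  have ma: "fa B \<le> fa A" if "A \<subseteq> B" "B \<subseteq> T" for A B
    unfolding fa_def by (rule insert.prems) (use that in auto)
  have m: "f B \<le> f A" if "A \<subseteq> B" "B \<subseteq> T" for A B
    using insert.prems that by auto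
  have i1: "Exs q' T fa \<le> Exs q T fa" using insert.IH[of fa] ma by blast
  have i2: "Exs q' T f \<le> Exs q T f" using insert.IH[of f] m by blast
  have i3': "fa A \<le> f A" if "A \<subseteq> T" for A
    unfolding fa_def by (rule insert.prems) (use that in auto)
  have i3: "Exs q T fa \<le> Exs q T f"
    using assms(2,3,4) i3' by (intro Exs_mono) auto
  have "Exs q' (insert a T) f = q' * Exs q' T fa + (1 - q') * Exs q' T f"
    using insert.hyps by (simp add: Exs_insert fa_def)
  also have "\<dots> \<le> q' * Exs q T fa + (1 - q') * Exs q T f"
    using i1 i2 assms(2,3,4) by (intro add_mono mult_left_mono) auto
  also have "\<dots> \<le> q * Exs q T fa + (1 - q) * Exs q T f"
  proof -
    have "(q' - q) * (Exs q T fa - Exs q T f) \<le> 0"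
      using i3 assms(3) by (intro mult_nonneg_nonpos) auto
    then show ?thesis by (simp add: algebra_simps)
  qed
  also have "\<dots> = Exs q (insert a T) f"
    using insert.hyps by (simp add: Exs_insert fa_def)
  finally show ?case .
qed

lemma pattern_Exs:
  assumes "finite I" "\<forall>i\<in>I. 0 \<le> r i \<and> r i \<le> 1" "\<forall>t. (t, k) \<in> I \<longrightarrow> r (t, k) = r0"
  shows "(\<Sum>e\<in>PiE I (\<lambda>_. UNIV). (\<Prod>i\<in>I. if e i then r i else 1 - r i) *
            \<psi> {t. (t, k) \<in> I \<and> \<not> e (t, k)}) = Exs (1 - r0) {t. (t, k) \<in> I} \<psi>"
  using assms
proof (induction I arbitrary: \<psi> rule: finite_induct)
  case empty then show ?case by (simp add: Exs_empty)
next
  case (insert a I)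
  let ?w = "\<lambda>i b. if b then r i else 1 - r i"
  have IH: "(\<Sum>e\<in>PiE I (\<lambda>_. UNIV). (\<Prod>i\<in>I. ?w i (e i)) * \<psi>' {t. (t, k) \<in> I \<and> \<not> e (t, k)})
      = Exs (1 - r0) {t. (t, k) \<in> I} \<psi>'" for \<psi>'
    using insert.IH[of \<psi>'] insert.prems by auto
  have "(\<Sum>e\<in>PiE (insert a I) (\<lambda>_. UNIV). (\<Prod>i\<in>insert a I. ?w i (e i)) *
            \<psi> {t. (t, k) \<in> insert a I \<and> \<not> e (t, k)}) =
        (\<Sum>yg\<in>UNIV \<times> PiE I (\<lambda>_. UNIV). (\<Prod>i\<in>insert a I. ?w i (((snd yg)(a := fst yg)) i)) *
            \<psi> {t. (t, k) \<in> insert a I \<and> \<not> ((snd yg)(a := fst yg)) (t, k)})"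
    unfolding PiE_insert_eq using inj_combinator[OF insert.hyps(2), of "\<lambda>_. UNIV"]
    by (subst sum.reindex) (auto simp: split_def)
  also have "\<dots> = (\<Sum>(y, g)\<in>UNIV \<times> PiE I (\<lambda>_. UNIV). ?w a y * ((\<Prod>i\<in>I. ?w i (g i)) *
            \<psi> {t. (t, k) \<in> insert a I \<and> \<not> (g(a := y)) (t, k)}))"
  proof (rule sum.cong[OF refl])
    fix yg assume g: "yg \<in> (UNIV :: bool set) \<times> PiE I (\<lambda>_. UNIV :: bool set)"
    obtain y g where yg: "yg = (y, g)" by (cases yg)
    have "(\<Prod>i\<in>insert a I. ?w i ((g(a := y)) i)) = ?w a y * (\<Prod>i\<in>I. ?w i ((g(a := y)) i))"
      using insert.hyps by (simp add: prod.insert)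
    also have "(\<Prod>i\<in>I. ?w i ((g(a := y)) i)) = (\<Prod>i\<in>I. ?w i (g i))"
      using insert.hyps by (intro prod.cong) auto
    finally show "(\<Prod>i\<in>insert a I. ?w i (((snd yg)(a := fst yg)) i)) *
            \<psi> {t. (t, k) \<in> insert a I \<and> \<not> ((snd yg)(a := fst yg)) (t, k)} =
          (case yg of (y, g) \<Rightarrow> ?w a y * ((\<Prod>i\<in>I. ?w i (g i)) * \<psi> {t. (t, k) \<in> insert a I \<and> \<not> (g(a := y)) (t, k)}))"
      unfolding yg by simp
  qed
  also have "\<dots> = (\<Sum>y\<in>UNIV. \<Sum>g\<in>PiE I (\<lambda>_. UNIV). ?w a y * ((\<Prod>i\<in>I. ?w i (g i)) *
            \<psi> {t. (t, k) \<in> insert a I \<and> \<not> (g(a := y)) (t, k)}))"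
    by (rule sum.cartesian_product[symmetric])
  also have "\<dots> = Exs (1 - r0) {t. (t, k) \<in> insert a I} \<psi>"
  proof -
  have sb: "\<And>G::bool\<Rightarrow>real. sum G UNIV = G True + G False" by (simp add: UNIV_bool)
  show ?thesis
  proof (cases "snd a = k")
    case True
    obtain t0 where a: "a = (t0, k)" using True by (cases a) auto
    have t0: "t0 \<notin> {t. (t, k) \<in> I}" using insert.hyps a by auto
    have ra: "r a = r0" using insert.prems a by auto
    have fT: "finite {t. (t, k) \<in> I}"
      using insert.hyps(1) by (rule finite_subset[rotated, OF finite_imageI[of _ fst]]) force
    have s1: "{t. (t, k) \<in> insert a I \<and> \<not> (g(a := True)) (t, k)} = {t. (t, k) \<in> I \<and> \<not> g (t, k)}" for g
      using a insert.hyps by auto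
    have s2: "{t. (t, k) \<in> insert a I \<and> \<not> (g(a := False)) (t, k)} = insert t0 {t. (t, k) \<in> I \<and> \<not> g (t, k)}" for g
      using a insert.hyps by auto
    have T: "{t. (t, k) \<in> insert a I} = insert t0 {t. (t, k) \<in> I}" using a by auto
    have e1: "(\<Sum>g\<in>PiE I (\<lambda>_. UNIV). (\<Prod>i\<in>I. ?w i (g i)) *
            \<psi> {t. (t, k) \<in> insert a I \<and> \<not> (g(a := True)) (t, k)}) = Exs (1 - r0) {t. (t, k) \<in> I} \<psi>"
      unfolding s1 by (rule IH)
    have e2: "(\<Sum>g\<in>PiE I (\<lambda>_. UNIV). (\<Prod>i\<in>I. ?w i (g i)) *
            \<psi> {t. (t, k) \<in> insert a I \<and> \<not> (g(a := False)) (t, k)}) =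
          Exs (1 - r0) {t. (t, k) \<in> I} (\<lambda>A. \<psi> (insert t0 A))"
      unfolding s2 by (rule IH)
    have "(\<Sum>y\<in>UNIV. \<Sum>g\<in>PiE I (\<lambda>_. UNIV). ?w a y * ((\<Prod>i\<in>I. ?w i (g i)) *
            \<psi> {t. (t, k) \<in> insert a I \<and> \<not> (g(a := y)) (t, k)})) =
        (\<Sum>y\<in>UNIV. ?w a y * (\<Sum>g\<in>PiE I (\<lambda>_. UNIV). (\<Prod>i\<in>I. ?w i (g i)) *
            \<psi> {t. (t, k) \<in> insert a I \<and> \<not> (g(a := y)) (t, k)}))"
      by (simp add: sum_distrib_left)
    also have "\<dots> = r0 * Exs (1 - r0) {t. (t, k) \<in> I} \<psi> +
        (1 - r0) * Exs (1 - r0) {t. (t, k) \<in> I} (\<lambda>A. \<psi> (insert t0 A))"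
      unfolding sb using e1 e2 ra by simp
    also have "\<dots> = Exs (1 - r0) {t. (t, k) \<in> insert a I} \<psi>"
      unfolding T Exs_insert[OF fT t0] by simp
    finally show ?thesis .
  next
    case False
    have s: "{t. (t, k) \<in> insert a I \<and> \<not> (g(a := y)) (t, k)} = {t. (t, k) \<in> I \<and> \<not> g (t, k)}" for g y
      using False insert.hyps by (cases a) auto
    have s': "{t. (t, k) \<in> insert a I} = {t. (t, k) \<in> I}" using False by (cases a) auto
    have e: "(\<Sum>g\<in>PiE I (\<lambda>_. UNIV). (\<Prod>i\<in>I. ?w i (g i)) *
            \<psi> {t. (t, k) \<in> insert a I \<and> \<not> (g(a := y)) (t, k)}) = Exs (1 - r0) {t. (t, k) \<in> I} \<psi>" for y
      unfolding s by (rule IH)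
    have "(\<Sum>y\<in>UNIV. \<Sum>g\<in>PiE I (\<lambda>_. UNIV). ?w a y * ((\<Prod>i\<in>I. ?w i (g i)) *
            \<psi> {t. (t, k) \<in> insert a I \<and> \<not> (g(a := y)) (t, k)})) =
        (\<Sum>y\<in>UNIV. ?w a y * (\<Sum>g\<in>PiE I (\<lambda>_. UNIV). (\<Prod>i\<in>I. ?w i (g i)) *
            \<psi> {t. (t, k) \<in> insert a I \<and> \<not> (g(a := y)) (t, k)}))"
      by (simp add: sum_distrib_left)
    also have "\<dots> = Exs (1 - r0) {t. (t, k) \<in> I} \<psi>"
      unfolding sb e by (simp add: algebra_simps)
    finally show ?thesis unfolding s' .
  qed
  qed
  finally show ?case .
qed


lemma fdist_prod:
  assumes "fdist O0 p0" "fdist O1 p1"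
  shows "fdist (O0 \<times> O1) (\<lambda>x. p0 (fst x) * p1 (snd x))"
proof -
  interpret A: fdist O0 p0 by fact
  interpret B: fdist O1 p1 by fact
  show ?thesis
  proof
    show "finite (O0 \<times> O1)" using A.fin B.fin by simp
    show "0 \<le> p0 (fst w) * p1 (snd w)" if "w \<in> O0 \<times> O1" for w
      using that A.nonneg B.nonneg by auto
    have "(\<Sum>x\<in>O0 \<times> O1. p0 (fst x) * p1 (snd x)) = (\<Sum>a\<in>O0. \<Sum>b\<in>O1. p0 a * p1 b)"
      by (simp add: sum.cartesian_product split_def)
    also have "\<dots> = 1" using A.total B.total by (simp add: sum_distrib_left[symmetric] sum_distrib_right[symmetric])
    finally show "(\<Sum>x\<in>O0 \<times> O1. p0 (fst x) * p1 (snd x)) = 1" .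
  qed
qed

lemma prod_Pr_fst:
  assumes "fdist O0 p0" "fdist O1 p1" "a \<in> O0"
  shows "fdist.Pr (O0 \<times> O1) (\<lambda>x. p0 (fst x) * p1 (snd x)) (\<lambda>x. G (fst x)) (G a) =
         fdist.Pr O0 p0 G (G a)"
proof -
  interpret A: fdist O0 p0 by fact
  interpret B: fdist O1 p1 by fact
  have "{x \<in> O0 \<times> O1. G (fst x) = G a} = {a' \<in> O0. G a' = G a} \<times> O1" by auto
  then have "sum (\<lambda>x. p0 (fst x) * p1 (snd x)) {x \<in> O0 \<times> O1. G (fst x) = G a} =
      (\<Sum>a'\<in>{a' \<in> O0. G a' = G a}. \<Sum>b\<in>O1. p0 a' * p1 b)"
    by (simp add: sum.cartesian_product split_def)
  also have "\<dots> = sum p0 {a' \<in> O0. G a' = G a}"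
    using B.total by (simp add: sum_distrib_left[symmetric])
  finally show ?thesis
    unfolding fdist.Pr_def[OF fdist_prod[OF assms(1,2)]] A.Pr_def .
qed

lemma prod_ent_fst:
  assumes "fdist O0 p0" "fdist O1 p1"
  shows "fdist.ent (O0 \<times> O1) (\<lambda>x. p0 (fst x) * p1 (snd x)) (\<lambda>x. G (fst x)) = fdist.ent O0 p0 G"
proof -
  interpret A: fdist O0 p0 by fact
  interpret B: fdist O1 p1 by fact
  interpret P: fdist "O0 \<times> O1" "\<lambda>x. p0 (fst x) * p1 (snd x)" by (rule fdist_prod[OF assms])
  have "(\<Sum>x\<in>O0 \<times> O1. p0 (fst x) * p1 (snd x) * ln (P.Pr (\<lambda>x. G (fst x)) (G (fst x)))) =
        (\<Sum>a\<in>O0. \<Sum>b\<in>O1. p0 a * p1 b * ln (A.Pr G (G a)))"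
    unfolding sum.cartesian_product
    by (intro sum.cong refl) (auto simp: prod_Pr_fst[OF assms])
  also have "\<dots> = (\<Sum>a\<in>O0. p0 a * ln (A.Pr G (G a)))"
    using B.total by (simp add: sum_distrib_left[symmetric] sum_distrib_right[symmetric] algebra_simps)
  finally show ?thesis unfolding P.ent_def A.ent_def by simp
qed

lemma prod_ent_dep:
  assumes "fdist O0 p0" "fdist O1 p1"
  shows "fdist.ent (O0 \<times> O1) (\<lambda>x. p0 (fst x) * p1 (snd x)) (\<lambda>x. (snd x, G (snd x) (fst x))) =
     - (\<Sum>b\<in>O1. p1 b * ln (p1 b)) + (\<Sum>b\<in>O1. p1 b * fdist.ent O0 p0 (G b))"
proof -
  interpret A: fdist O0 p0 by fact
  interpret B: fdist O1 p1 by fact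
  interpret P: fdist "O0 \<times> O1" "\<lambda>x. p0 (fst x) * p1 (snd x)" by (rule fdist_prod[OF assms])
  have Pr: "P.Pr (\<lambda>x. (snd x, G (snd x) (fst x))) (b, G b a) = p1 b * A.Pr (G b) (G b a)"
    if "a \<in> O0" "b \<in> O1" for a b
  proof -
    have "{x \<in> O0 \<times> O1. (snd x, G (snd x) (fst x)) = (b, G b a)} = {a' \<in> O0. G b a' = G b a} \<times> {b}"
      using that by auto
    also have "\<dots> = (\<lambda>a'. (a', b)) ` {a' \<in> O0. G b a' = G b a}" by auto
    finally have "sum (\<lambda>x. p0 (fst x) * p1 (snd x)) {x \<in> O0 \<times> O1. (snd x, G (snd x) (fst x)) = (b, G b a)}
       = (\<Sum>a'\<in>{a' \<in> O0. G b a' = G b a}. p0 a' * p1 b)"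
      by (simp add: sum.reindex inj_on_def)
    then show ?thesis unfolding P.Pr_def A.Pr_def by (simp add: sum_distrib_right[symmetric] algebra_simps)
  qed
  have "(\<Sum>x\<in>O0 \<times> O1. p0 (fst x) * p1 (snd x) * ln (P.Pr (\<lambda>x. (snd x, G (snd x) (fst x))) (snd x, G (snd x) (fst x)))) =
        (\<Sum>a\<in>O0. \<Sum>b\<in>O1. p1 b * p0 a * ln (p1 b) + p1 b * (p0 a * ln (A.Pr (G b) (G b a))))"
    unfolding sum.cartesian_product
  proof (intro sum.cong refl)
    fix x assume "x \<in> O0 \<times> O1"
    then obtain a b where x: "x = (a, b)" and b: "b \<in> O1" and a: "a \<in> O0" by auto
    show "p0 (fst x) * p1 (snd x) * ln (P.Pr (\<lambda>x. (snd x, G (snd x) (fst x))) (snd x, G (snd x) (fst x))) =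
        (case x of (a, b) \<Rightarrow> p1 b * p0 a * ln (p1 b) + p1 b * (p0 a * ln (A.Pr (G b) (G b a))))"
    proof (cases "p0 a * p1 b = 0")
      case True
      then show ?thesis using x by auto
    next
      case False
      then have pa: "0 < p0 a" and pb: "0 < p1 b" using A.nonneg[OF a] B.nonneg[OF b]
        by (auto simp: less_le)
      have "0 < A.Pr (G b) (G b a)" using A.Pr_pos[of a "G b", OF a pa] .
      then show ?thesis using Pr[OF a b] pb x by (simp add: ln_mult algebra_simps)
    qed
  qed
  also have "\<dots> = (\<Sum>b\<in>O1. \<Sum>a\<in>O0. p1 b * p0 a * ln (p1 b) + p1 b * (p0 a * ln (A.Pr (G b) (G b a))))"
    by (rule sum.swap)
  also have "\<dots> = (\<Sum>b\<in>O1. p1 b * ln (p1 b)) + (\<Sum>b\<in>O1. p1 b * (\<Sum>a\<in>O0. p0 a * ln (A.Pr (G b) (G b a))))"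
  proof -
    have e1: "(\<Sum>a\<in>O0. p1 b * p0 a * ln (p1 b)) = p1 b * ln (p1 b)" for b
    proof -
      have "(\<Sum>a\<in>O0. p1 b * p0 a * ln (p1 b)) = (\<Sum>a\<in>O0. (p1 b * ln (p1 b)) * p0 a)"
        by (simp add: algebra_simps)
      also have "\<dots> = p1 b * ln (p1 b)" using A.total by (simp add: sum_distrib_left[symmetric])
      finally show ?thesis .
    qed
    have e2: "(\<Sum>a\<in>O0. p1 b * (p0 a * ln (A.Pr (G b) (G b a)))) = p1 b * (\<Sum>a\<in>O0. p0 a * ln (A.Pr (G b) (G b a)))" for b
      by (simp add: sum_distrib_left)
    show ?thesis by (simp only: sum.distrib e1 e2)
  qed
  finally show ?thesis unfolding P.ent_def A.ent_def
    by (simp add: sum_negf algebra_simps)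
qed


lemma fdist_Pow:
  assumes "finite T" "0 \<le> q" "q \<le> 1"
  shows "fdist (Pow T) (\<lambda>A. q ^ card A * (1 - q) ^ card (T - A))"
proof
  show "finite (Pow T)" using assms by simp
  show "0 \<le> q ^ card A * (1 - q) ^ card (T - A)" for A using assms by simp
  show "(\<Sum>A\<in>Pow T. q ^ card A * (1 - q) ^ card (T - A)) = 1"
    using Exs_const[OF assms(1), of q 1] unfolding Exs_def by simp
qed

definition xs_of :: "nat set \<Rightarrow> (nat \<Rightarrow> 'x) \<Rightarrow> nat \<Rightarrow> 'x option" where
  "xs_of A x = (\<lambda>t. if t \<in> A then Some (x t) else None)"

lemma xs_of_eq_iff: "(xs_of A x = xs_of A' x') \<longleftrightarrow> A = A' \<and> (\<forall>t\<in>A. x t = x' t)"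
proof
  assume e: "xs_of A x = xs_of A' x'"
  have "A = A'"
  proof -
    have "t \<in> A \<longleftrightarrow> t \<in> A'" for t using fun_cong[OF e, of t] unfolding xs_of_def
      by (auto split: if_splits)
    then show ?thesis by auto
  qed
  moreover have "\<forall>t\<in>A. x t = x' t"
    using e \<open>A = A'\<close> unfolding xs_of_def by (metis option.inject)
  ultimately show "A = A' \<and> (\<forall>t\<in>A. x t = x' t)" by simp
next
  assume "A = A' \<and> (\<forall>t\<in>A. x t = x' t)"
  then show "xs_of A x = xs_of A' x'" unfolding xs_of_def by auto
qed

lemma cent_Y:
  fixes X :: "'a \<Rightarrow> nat \<Rightarrow> 'x" and U :: "'a \<Rightarrow> 'u"
  assumes fd: "fdist O0 p0" and T: "finite T" and q: "0 \<le> q" "q \<le> 1"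
  shows "fdist.cent (O0 \<times> Pow T) (\<lambda>x. p0 (fst x) * (q ^ card (snd x) * (1 - q) ^ card (T - snd x)))
           (\<lambda>x. xs_of (snd x) (X (fst x))) (\<lambda>x. U (fst x)) =
         - (\<Sum>A\<in>Pow T. q ^ card A * (1 - q) ^ card (T - A) * ln (q ^ card A * (1 - q) ^ card (T - A))) +
         Exs q T (\<lambda>A. fdist.cent O0 p0 (\<lambda>w. xs_of A (X w)) U)"
proof -
  have f1: "fdist (Pow T) (\<lambda>A. q ^ card A * (1 - q) ^ card (T - A))" by (rule fdist_Pow[OF T q])
  interpret A: fdist O0 p0 by fact
  interpret B: fdist "Pow T" "\<lambda>A. q ^ card A * (1 - q) ^ card (T - A)" by fact
  interpret P: fdist "O0 \<times> Pow T" "\<lambda>x. p0 (fst x) * (q ^ card (snd x) * (1 - q) ^ card (T - snd x))"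
    using fdist_prod[OF fd f1] by simp
  have "P.ent (\<lambda>x. (xs_of (snd x) (X (fst x)), U (fst x))) =
        P.ent (\<lambda>x. (snd x, (\<lambda>A w. (xs_of A (X w), U w)) (snd x) (fst x)))"
    by (rule P.ent_cong) (auto simp: xs_of_eq_iff)
  also have "\<dots> = - (\<Sum>A\<in>Pow T. q ^ card A * (1 - q) ^ card (T - A) * ln (q ^ card A * (1 - q) ^ card (T - A))) +
      (\<Sum>A\<in>Pow T. q ^ card A * (1 - q) ^ card (T - A) * A.ent (\<lambda>w. (xs_of A (X w), U w)))"
    using prod_ent_dep[OF fd f1, of "\<lambda>A w. (xs_of A (X w), U w)"] by simp
  finally have e1: "P.ent (\<lambda>x. (xs_of (snd x) (X (fst x)), U (fst x))) = \<dots>" .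
  have e2: "P.ent (\<lambda>x. U (fst x)) = A.ent U"
    using prod_ent_fst[OF fd f1, of U] by simp
  have e3: "(\<Sum>A\<in>Pow T. q ^ card A * (1 - q) ^ card (T - A) * A.ent (\<lambda>w. (xs_of A (X w), U w))) - A.ent U
      = Exs q T (\<lambda>A. A.cent (\<lambda>w. xs_of A (X w)) U)"
  proof -
    have "Exs q T (\<lambda>A. A.cent (\<lambda>w. xs_of A (X w)) U) =
        Exs q T (\<lambda>A. A.ent (\<lambda>w. (xs_of A (X w), U w))) - Exs q T (\<lambda>_. A.ent U)"
      unfolding A.cent_def by (rule Exs_diff)
    then show ?thesis using Exs_const[OF T, of q "A.ent U"] unfolding Exs_def by simp
  qed
  show ?thesis unfolding P.cent_def e1 e2 using e3 by simp
qed

lemma per_user: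
  fixes X :: "'a \<Rightarrow> nat \<Rightarrow> 'x" and Wd :: "'a \<Rightarrow> 'b" and U :: "'a \<Rightarrow> 'u" and U' :: "'a \<Rightarrow> 'v"
  assumes fd: "fdist O0 p0" and T: "finite T" and q: "0 \<le> q" "q \<le> 1"
    and part: "\<And>w w'. w \<in> O0 \<Longrightarrow> w' \<in> O0 \<Longrightarrow> (Wd w' = Wd w \<and> U w' = U w) = (U' w' = U' w)"
  shows "fdist.cent O0 p0 Wd U \<le>
     Exs q T (\<lambda>A. fdist.cent O0 p0 (\<lambda>w. xs_of A (X w)) U) -
     Exs q T (\<lambda>A. fdist.cent O0 p0 (\<lambda>w. xs_of A (X w)) U') + ln 2 +
     (\<Sum>w\<in>O0. p0 w * Exs q T (\<lambda>A. if Wd w \<noteq> \<psi> (xs_of A (X w)) (U w) then 1 else 0)) *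
       ln (real (card (Wd ` O0)))"
proof -
  have f1: "fdist (Pow T) (\<lambda>A. q ^ card A * (1 - q) ^ card (T - A))" by (rule fdist_Pow[OF T q])
  interpret A: fdist O0 p0 by fact
  interpret B: fdist "Pow T" "\<lambda>A. q ^ card A * (1 - q) ^ card (T - A)" by fact
  define pp where "pp x = p0 (fst x) * (q ^ card (snd x) * (1 - q) ^ card (T - snd x))" for x :: "'a \<times> nat set"
  interpret P: fdist "O0 \<times> Pow T" pp
    using fdist_prod[OF fd f1] unfolding pp_def by simp
  define Y where "Y x = xs_of (snd x) (X (fst x))" for x :: "'a \<times> nat set"
  define W1 where "W1 x = Wd (fst x)" for x :: "'a \<times> nat set"
  define U1 where "U1 x = U (fst x)" for x :: "'a \<times> nat set"
  define U1' where "U1' x = U' (fst x)" for x :: "'a \<times> nat set"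
  define Hb where "Hb = - (\<Sum>A\<in>Pow T. q ^ card A * (1 - q) ^ card (T - A) * ln (q ^ card A * (1 - q) ^ card (T - A)))"
  have cY: "P.cent Y U1 = Hb + Exs q T (\<lambda>A. A.cent (\<lambda>w. xs_of A (X w)) U)"
    unfolding Y_def U1_def Hb_def pp_def by (rule cent_Y[OF fd T q])
  have cY': "P.cent Y U1' = Hb + Exs q T (\<lambda>A. A.cent (\<lambda>w. xs_of A (X w)) U')"
    unfolding Y_def U1'_def Hb_def pp_def by (rule cent_Y[OF fd T q])
  have cW: "P.cent W1 U1 = A.cent Wd U"
    unfolding P.cent_def A.cent_def W1_def U1_def pp_def
    using prod_ent_fst[OF fd f1, of "\<lambda>w. (Wd w, U w)"] prod_ent_fst[OF fd f1, of U] by simp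
  have ident: "P.cent W1 U1 = P.cent Y U1 - P.cent Y (\<lambda>x. (W1 x, U1 x)) + P.cent W1 (\<lambda>x. (Y x, U1 x))"
  proof -
    have "P.ent (\<lambda>x. (W1 x, Y x, U1 x)) = P.ent (\<lambda>x. (Y x, W1 x, U1 x))"
      by (rule P.ent_cong) auto
    then show ?thesis unfolding P.cent_def by simp
  qed
  have cc: "P.cent Y (\<lambda>x. (W1 x, U1 x)) = P.cent Y U1'"
  proof (rule P.cent_cong)
    fix x x' assume x: "x \<in> O0 \<times> Pow T" and x': "x' \<in> O0 \<times> Pow T"
    have "fst x \<in> O0" "fst x' \<in> O0" using x x' by auto
    note pt = part[OF this]
    show "(Y x' = Y x \<and> (W1 x', U1 x') = (W1 x, U1 x)) = (Y x' = Y x \<and> U1' x' = U1' x)"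
      using pt by (auto simp: W1_def U1_def U1'_def)
    show "((W1 x', U1 x') = (W1 x, U1 x)) = (U1' x' = U1' x)"
      using pt by (auto simp: W1_def U1_def U1'_def)
  qed
  have fano: "P.cent W1 (\<lambda>x. (Y x, U1 x)) \<le> ln 2 +
      sum pp {x \<in> O0 \<times> Pow T. W1 x \<noteq> (\<lambda>(y, u). \<psi> y u) (Y x, U1 x)} * ln (real (card (W1 ` (O0 \<times> Pow T))))"
    by (rule P.fano)
  have card: "W1 ` (O0 \<times> Pow T) = Wd ` O0"
    unfolding W1_def by force
  have pe: "sum pp {x \<in> O0 \<times> Pow T. W1 x \<noteq> (\<lambda>(y, u). \<psi> y u) (Y x, U1 x)} =
      (\<Sum>w\<in>O0. p0 w * Exs q T (\<lambda>A. if Wd w \<noteq> \<psi> (xs_of A (X w)) (U w) then 1 else 0))"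
  proof -
    have "sum pp {x \<in> O0 \<times> Pow T. W1 x \<noteq> (\<lambda>(y, u). \<psi> y u) (Y x, U1 x)} =
        (\<Sum>x\<in>O0 \<times> Pow T. if W1 x \<noteq> (\<lambda>(y, u). \<psi> y u) (Y x, U1 x) then pp x else 0)"
      using P.fin by (rule sum.inter_filter)
    also have "\<dots> = (\<Sum>w\<in>O0. \<Sum>A\<in>Pow T. p0 w * (q ^ card A * (1 - q) ^ card (T - A) *
          (if Wd w \<noteq> \<psi> (xs_of A (X w)) (U w) then 1 else 0)))"
      unfolding sum.cartesian_product
      by (intro sum.cong refl) (auto simp: pp_def W1_def Y_def U1_def)
    also have "\<dots> = (\<Sum>w\<in>O0. p0 w * Exs q T (\<lambda>A. if Wd w \<noteq> \<psi> (xs_of A (X w)) (U w) then 1 else 0))"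
      unfolding Exs_def sum_distrib_left by simp
    finally show ?thesis .
  qed
  show ?thesis using ident cc fano cW cY cY' unfolding card pe by simp
qed


definition Psi :: "'a set \<Rightarrow> ('a \<Rightarrow> real) \<Rightarrow> ('a \<Rightarrow> nat \<Rightarrow> 'x) \<Rightarrow> nat \<Rightarrow> real \<Rightarrow> ('a \<Rightarrow> 'u) \<Rightarrow> real" where
  "Psi O0 p0 X n q U = (\<Sum>t<n. Exs q {..<t} (\<lambda>B. fdist.cent O0 p0 (\<lambda>w. X w t) (\<lambda>w. (xs_of B (X w), U w))))"

lemma (in fdist) cent_const: "cent (\<lambda>_. c) U = 0"
  unfolding cent_def by (simp add: ent_cong[of "\<lambda>w. (c, U w)" U])

lemma Exs_chain:
  fixes X :: "'a \<Rightarrow> nat \<Rightarrow> 'x" and U :: "'a \<Rightarrow> 'u"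
  assumes fd: "fdist O0 p0"
  shows "Exs q {..<n} (\<lambda>A. fdist.cent O0 p0 (\<lambda>w. xs_of A (X w)) U) = q * Psi O0 p0 X n q U"
proof (induction n)
  interpret A: fdist O0 p0 by fact
  case 0
  have "xs_of {} x = (\<lambda>_. None)" for x :: "nat \<Rightarrow> 'x" unfolding xs_of_def by auto
  then show ?case unfolding Psi_def by (simp add: Exs_empty A.cent_const)
next
  interpret A: fdist O0 p0 by fact
  case (Suc n)
  have step: "A.cent (\<lambda>w. xs_of (insert n B) (X w)) U =
      A.cent (\<lambda>w. xs_of B (X w)) U + A.cent (\<lambda>w. X w n) (\<lambda>w. (xs_of B (X w), U w))"
    if "B \<subseteq> {..<n}" for B
  proof -
    have nB: "n \<notin> B" using that by auto
    have "A.ent (\<lambda>w. (xs_of (insert n B) (X w), U w)) = A.ent (\<lambda>w. (X w n, xs_of B (X w), U w))"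
      by (rule A.ent_cong) (auto simp: xs_of_eq_iff)
    then show ?thesis unfolding A.cent_def by simp
  qed
  have "Exs q {..<Suc n} (\<lambda>A. A.cent (\<lambda>w. xs_of A (X w)) U) =
      q * Exs q {..<n} (\<lambda>B. A.cent (\<lambda>w. xs_of (insert n B) (X w)) U) +
      (1 - q) * Exs q {..<n} (\<lambda>A. A.cent (\<lambda>w. xs_of A (X w)) U)"
    unfolding lessThan_Suc by (rule Exs_insert) auto
  also have "Exs q {..<n} (\<lambda>B. A.cent (\<lambda>w. xs_of (insert n B) (X w)) U) =
      Exs q {..<n} (\<lambda>B. A.cent (\<lambda>w. xs_of B (X w)) U + A.cent (\<lambda>w. X w n) (\<lambda>w. (xs_of B (X w), U w)))"
    by (rule Exs_cong) (rule step)
  also have "\<dots> = Exs q {..<n} (\<lambda>B. A.cent (\<lambda>w. xs_of B (X w)) U) +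
       Exs q {..<n} (\<lambda>B. A.cent (\<lambda>w. X w n) (\<lambda>w. (xs_of B (X w), U w)))"
    by (rule Exs_add)
  finally show ?case unfolding Suc Psi_def by (simp add: algebra_simps)
qed

lemma Psi_antitone:
  fixes X :: "'a \<Rightarrow> nat \<Rightarrow> 'x" and U :: "'a \<Rightarrow> 'u"
  assumes fd: "fdist O0 p0" and q: "0 \<le> q" "q \<le> q'" "q' \<le> 1"
  shows "Psi O0 p0 X n q' U \<le> Psi O0 p0 X n q U"
  unfolding Psi_def
proof (rule sum_mono)
  interpret A: fdist O0 p0 by fact
  fix t
  show "Exs q' {..<t} (\<lambda>B. A.cent (\<lambda>w. X w t) (\<lambda>w. (xs_of B (X w), U w))) \<le>
        Exs q {..<t} (\<lambda>B. A.cent (\<lambda>w. X w t) (\<lambda>w. (xs_of B (X w), U w)))"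
  proof (rule Exs_antitone_q[OF _ q])
    fix B B' :: "nat set" assume "B \<subseteq> B'" "B' \<subseteq> {..<t}"
    then show "A.cent (\<lambda>w. X w t) (\<lambda>w. (xs_of B' (X w), U w)) \<le> A.cent (\<lambda>w. X w t) (\<lambda>w. (xs_of B (X w), U w))"
      by (intro A.cent_mono_fun[where h = "\<lambda>(y, u). (\<lambda>s. if s \<in> B then y s else None, u)"])
        (auto simp: xs_of_def fun_eq_iff)
  qed simp
qed

lemma Psi_nonneg:
  assumes fd: "fdist O0 p0" and q: "0 \<le> q" "q \<le> 1"
  shows "0 \<le> Psi O0 p0 X n q U"
proof -
  interpret A: fdist O0 p0 by fact
  show ?thesis unfolding Psi_def
    by (intro sum_nonneg Exs_nonneg q A.cent_nonneg)
qed

lemma Psi_le: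
  assumes fd: "fdist O0 p0" and q: "0 \<le> q" "q \<le> 1"
    and card: "\<And>t. t < n \<Longrightarrow> card ((\<lambda>w. X w t) ` O0) \<le> Cn"
  shows "Psi O0 p0 X n q U \<le> real n * ln (real Cn)"
proof -
  interpret A: fdist O0 p0 by fact
  have ne: "O0 \<noteq> {}" using A.total by auto
  have "Psi O0 p0 X n q U \<le> (\<Sum>t<n. ln (real Cn))"
    unfolding Psi_def
  proof (rule sum_mono)
    fix t assume t: "t \<in> {..<n}"
    have c0: "0 < card ((\<lambda>w. X w t) ` O0)" using ne A.fin by (auto simp: card_gt_0_iff)
    have "ln (real (card ((\<lambda>w. X w t) ` O0))) \<le> ln (real Cn)"
      using card[of t] t c0 by simp
    then show "Exs q {..<t} (\<lambda>B. A.cent (\<lambda>w. X w t) (\<lambda>w. (xs_of B (X w), U w))) \<le> ln (real Cn)"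
      using A.cent_le_card[of "\<lambda>w. X w t"] by (intro Exs_le_const q) (auto intro: order.trans)
  qed
  then show ?thesis by simp
qed


lemma mod_shift_inj:
  assumes "(i::nat) < D" "i' < D" "(i + j) mod D = (i' + j) mod D"
  shows "i = i'"
proof -
  have *: "a = b" if "b \<le> a" "a < D" "(a + j) mod D = (b + j) mod D" for a b :: nat
  proof -
    have "D dvd (a + j) - (b + j)" using mod_eq_dvd_iff_nat[of "b + j" "a + j" D] that by auto
    then have "D dvd a - b" by simp
    moreover have "a - b < D" using that by simp
    ultimately have "a - b = 0" using nat_dvd_not_less by (metis gr0I)
    then show ?thesis using that by simp
  qed
  show ?thesis
  proof (cases "i' \<le> i")
    case True then show ?thesis using * assms by blast
  next
    case False then show ?thesis using *[of i i'] assms by simp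
  qed
qed

lemma shift_inj: "inj_on (\<lambda>i. (i + j) mod D + 1) {..<(D::nat)}"
proof (rule inj_onI)
  fix x y assume "x \<in> {..<D}" "y \<in> {..<D}" "(x + j) mod D + 1 = (y + j) mod D + 1"
  then show "x = y" using mod_shift_inj[of x D y j] by simp
qed

lemma shift_sum:
  fixes D :: nat
  assumes "i < D"
  shows "(\<Sum>j<D. a ((i + j) mod D + 1)) = (\<Sum>x\<in>{1..D}. (a x :: real))"
proof -
  have inj: "inj_on (\<lambda>j. (i + j) mod D + 1) {..<D}"
  proof (rule inj_onI)
    fix x y assume "x \<in> {..<D}" "y \<in> {..<D}" "(i + x) mod D + 1 = (i + y) mod D + 1"
    then show "x = y" using mod_shift_inj[of x D y i] by (simp add: add.commute)
  qed
  have sub: "(\<lambda>j. (i + j) mod D + 1) ` {..<D} \<subseteq> {1..D}"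
    using assms by (auto simp: Suc_le_eq)
  have "card ((\<lambda>j. (i + j) mod D + 1) ` {..<D}) = card {1..D}"
    using card_image[OF inj] by simp
  then have img: "(\<lambda>j. (i + j) mod D + 1) ` {..<D} = {1..D}"
    using sub by (intro card_subset_eq) auto
  show ?thesis
    using sum.reindex[OF inj, of a] unfolding img by simp
qed

lemma cyclic_sum:
  fixes D :: nat
  assumes "I \<subseteq> {..<D}"
  shows "(\<Sum>j<D. \<Sum>x\<in>(\<lambda>i. (i + j) mod D + 1) ` I. a x) = real (card I) * (\<Sum>x\<in>{1..D}. (a x :: real))"
proof -
  have "(\<Sum>j<D. \<Sum>x\<in>(\<lambda>i. (i + j) mod D + 1) ` I. a x) = (\<Sum>j<D. \<Sum>i\<in>I. a ((i + j) mod D + 1))"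
  proof (rule sum.cong[OF refl])
    fix j
    have "inj_on (\<lambda>i. (i + j) mod D + 1) I" using shift_inj[of j D] assms by (rule inj_on_subset)
    then show "(\<Sum>x\<in>(\<lambda>i. (i + j) mod D + 1) ` I. a x) = (\<Sum>i\<in>I. a ((i + j) mod D + 1))"
      by (simp add: sum.reindex)
  qed
  also have "\<dots> = (\<Sum>i\<in>I. \<Sum>j<D. a ((i + j) mod D + 1))" by (rule sum.swap)
  also have "\<dots> = (\<Sum>i\<in>I. \<Sum>x\<in>{1..D}. a x)"
  proof (rule sum.cong[OF refl])
    fix i assume "i \<in> I"
    then show "(\<Sum>j<D. a ((i + j) mod D + 1)) = (\<Sum>x\<in>{1..D}. a x)"
      using assms by (intro shift_sum) auto
  qed
  finally show ?thesis by simp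
qed

lemma tele:
  assumes "\<And>i. Suc i < s \<Longrightarrow> a i (Suc i) \<le> a (Suc i) (Suc i)" "0 < s"
  shows "(\<Sum>i<s. a i (Suc i) - a i i) \<le> a (s - 1) s - (a 0 0 :: real)"
  using assms
proof (induction s)
  case 0 then show ?case by simp
next
  case (Suc s)
  show ?case
  proof (cases "s = 0")
    case True then show ?thesis by simp
  next
    case False
    have IH: "(\<Sum>i<s. a i (Suc i) - a i i) \<le> a (s - 1) s - a 0 0"
      using Suc.IH Suc.prems False by auto
    have "a (s - 1) s \<le> a s s" using Suc.prems(1)[of "s - 1"] False by simp
    then show ?thesis using IH by simp
  qed
qed

lemma abel:
  "(\<Sum>i<s. c i * (h i - h (Suc i))) =
   (\<Sum>i<s. (c i - (if i = 0 then 0 else c (i - 1))) * h i) - (if s = 0 then 0 else c (s - 1) * (h s :: real))"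
proof (induction s)
  case 0 then show ?case by simp
next
  case (Suc s) then show ?case by (cases s) (auto simp: algebra_simps)
qed

lemma delta_sum: "(\<Sum>i<Suc s. (c i - (if i = 0 then 0 else c (i - 1)))) = (c s :: real)"
  by (induction s) auto

lemma abel2:
  "(\<Sum>i<s. (c i - (if i = 0 then 0 else c (i - 1))) * real (s - i)) = (\<Sum>i<s. c i :: real)"
proof (induction s)
  case 0 then show ?case by simp
next
  case (Suc s)
  have "(\<Sum>i<Suc s. (c i - (if i = 0 then 0 else c (i - 1))) * real (Suc s - i)) =
        (\<Sum>i<Suc s. (c i - (if i = 0 then 0 else c (i - 1))) * real (s - i) + (c i - (if i = 0 then 0 else c (i - 1))))"
    by (intro sum.cong refl) (auto simp: Suc_diff_le of_nat_Suc algebra_simps)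
  also have "\<dots> = (\<Sum>i<s. c i) + c s"
    unfolding sum.distrib delta_sum using Suc.IH by simp
  finally show ?case by simp
qed

context fdist
begin

definition hU :: "('a \<Rightarrow> 'v) \<Rightarrow> ('a \<Rightarrow> nat \<Rightarrow> 'c) \<Rightarrow> nat set \<Rightarrow> real" where
  "hU V W F = ent (\<lambda>w. (V w, restrict (W w) F))"

lemma restrict_insert_eq:
  "(restrict f (insert d F) = restrict g (insert d F)) \<longleftrightarrow> f d = g d \<and> restrict f F = restrict g F"
  unfolding restrict_def fun_eq_iff by auto

lemma hU_insert:
  "cent (\<lambda>w. W w d) (\<lambda>w. (V w, restrict (W w) F)) = hU V W (insert d F) - hU V W F"
proof -
  have "ent (\<lambda>w. (W w d, V w, restrict (W w) F)) = ent (\<lambda>w. (V w, restrict (W w) (insert d F)))"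
    by (rule ent_cong) (auto simp: restrict_insert_eq)
  then show ?thesis unfolding cent_def hU_def by simp
qed

lemma hU_chain:
  "hU V W (T \<inter> {..<N}) - hU V W {} =
   (\<Sum>x\<in>T \<inter> {..<N}. cent (\<lambda>w. W w x) (\<lambda>w. (V w, restrict (W w) (T \<inter> {..<x}))))"
proof (induction N)
  case 0 then show ?case by simp
next
  case (Suc N)
  show ?case
  proof (cases "N \<in> T")
    case True
    have e: "T \<inter> {..<Suc N} = insert N (T \<inter> {..<N})" using True by auto
    have "hU V W (T \<inter> {..<Suc N}) = hU V W (T \<inter> {..<N}) + cent (\<lambda>w. W w N) (\<lambda>w. (V w, restrict (W w) (T \<inter> {..<N})))"
      unfolding e hU_insert by simp
    moreover have "(\<Sum>x\<in>T \<inter> {..<Suc N}. cent (\<lambda>w. W w x) (\<lambda>w. (V w, restrict (W w) (T \<inter> {..<x})))) =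
        cent (\<lambda>w. W w N) (\<lambda>w. (V w, restrict (W w) (T \<inter> {..<N}))) +
        (\<Sum>x\<in>T \<inter> {..<N}. cent (\<lambda>w. W w x) (\<lambda>w. (V w, restrict (W w) (T \<inter> {..<x}))))"
      unfolding e by (subst sum.insert) auto
    ultimately show ?thesis using Suc.IH by linarith
  next
    case False
    have e: "T \<inter> {..<Suc N} = T \<inter> {..<N}" using False by (auto simp: less_Suc_eq)
    show ?thesis unfolding e by (rule Suc.IH)
  qed
qed

lemma hU_shearer:
  assumes "T \<subseteq> {1..D}"
  shows "(\<Sum>x\<in>T. cent (\<lambda>w. W w x) (\<lambda>w. (V w, restrict (W w) ({1..D} \<inter> {..<x})))) \<le> hU V W T - hU V W {}"
proof -
  have eT: "T \<inter> {..<Suc D} = T" using assms by auto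
  have "hU V W T - hU V W {} = (\<Sum>x\<in>T. cent (\<lambda>w. W w x) (\<lambda>w. (V w, restrict (W w) (T \<inter> {..<x}))))"
    using hU_chain[of V W T "Suc D"] unfolding eT .
  moreover have "(\<Sum>x\<in>T. cent (\<lambda>w. W w x) (\<lambda>w. (V w, restrict (W w) ({1..D} \<inter> {..<x})))) \<le>
      (\<Sum>x\<in>T. cent (\<lambda>w. W w x) (\<lambda>w. (V w, restrict (W w) (T \<inter> {..<x}))))"
  proof (rule sum_mono)
    fix x assume "x \<in> T"
    show "cent (\<lambda>w. W w x) (\<lambda>w. (V w, restrict (W w) ({1..D} \<inter> {..<x}))) \<le>
        cent (\<lambda>w. W w x) (\<lambda>w. (V w, restrict (W w) (T \<inter> {..<x})))"
      by (rule cent_mono_fun[where h = "\<lambda>(v, r). (v, restrict r (T \<inter> {..<x}))"])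
        (use assms in \<open>auto simp: restrict_def fun_eq_iff\<close>)
  qed
  ultimately show ?thesis by simp
qed

lemma hU_full:
  "hU V W {1..D} - hU V W {} = (\<Sum>x\<in>{1..D}. cent (\<lambda>w. W w x) (\<lambda>w. (V w, restrict (W w) ({1..D} \<inter> {..<x}))))"
  using hU_chain[of V W "{1..D}" "Suc D"] by (simp add: Int_absorb2 subset_iff)

lemma ent_uniform_inj:
  assumes "\<And>w. w \<in> Om \<Longrightarrow> p w = 1 / real (card Om)" "inj_on X Om"
  shows "ent X = ln (real (card Om))"
proof -
  have ne: "Om \<noteq> {}" using total by auto
  have Pr: "Pr X (X w) = 1 / real (card Om)" if "w \<in> Om" for w
  proof -
    have "{w' \<in> Om. X w' = X w} = {w}" using assms(2) that by (auto simp: inj_on_def)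
    then show ?thesis unfolding Pr_def using assms(1) that by simp
  qed
  have "ent X = - (\<Sum>w\<in>Om. (1 / real (card Om)) * ln (1 / real (card Om)))"
    unfolding ent_def using assms(1) Pr by (intro arg_cong[where f = uminus] sum.cong) auto
  also have "\<dots> = ln (real (card Om))"
    using ne fin by (simp add: ln_div)
  finally show ?thesis .
qed

end


lemma err_link:
  assumes k: "k \<in> {1..K}" and del: "\<forall>k\<in>{1..K}. 0 \<le> \<delta> k \<and> \<delta> k \<le> 1"
  shows "(\<Sum>w\<in>library D n R. (1 / real (card (library D n R))) *
     Exs (1 - \<delta> k) {..<n} (\<lambda>A. if w (d k) \<noteq> \<phi> k d (xs_of A (f d w)) (g k w) then 1 else 0))
     \<le> error_prob \<delta> K D n R g f \<phi> d"
proof -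
  let ?L = "library D n R"
  let ?I = "{..<n} \<times> {1..K}"
  have fI: "finite ?I" by simp
  have pp: "pattern_prob \<delta> K n e = (\<Prod>i\<in>?I. if e i then \<delta> (snd i) else 1 - \<delta> (snd i))" for e
    unfolding pattern_prob_def by simp
  have pp0: "0 \<le> pattern_prob \<delta> K n e" for e
    unfolding pattern_prob_def using del by (intro prod_nonneg) auto
  have co: "channel_output n (f d w) e k = xs_of {t. (t, k) \<in> ?I \<and> \<not> e (t, k)} (f d w)" for w e
    unfolding channel_output_def xs_of_def using k by (auto simp: fun_eq_iff)
  have TI: "{t. (t, k) \<in> ?I} = {..<n}" using k by auto
  have inner: "(\<Sum>e\<in>erasure_patterns K n. pattern_prob \<delta> K n e *
        (if \<phi> k d (channel_output n (f d w) e k) (g k w) \<noteq> w (d k) then 1 else 0)) =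
      Exs (1 - \<delta> k) {..<n} (\<lambda>A. if w (d k) \<noteq> \<phi> k d (xs_of A (f d w)) (g k w) then 1 else 0)" for w
  proof -
    have "(\<Sum>e\<in>erasure_patterns K n. pattern_prob \<delta> K n e *
        (if \<phi> k d (channel_output n (f d w) e k) (g k w) \<noteq> w (d k) then 1 else 0)) =
       (\<Sum>e\<in>PiE ?I (\<lambda>_. UNIV). (\<Prod>i\<in>?I. if e i then \<delta> (snd i) else 1 - \<delta> (snd i)) *
         (\<lambda>A. if w (d k) \<noteq> \<phi> k d (xs_of A (f d w)) (g k w) then 1 else 0) {t. (t, k) \<in> ?I \<and> \<not> e (t, k)})"
      unfolding erasure_patterns_def pp co by (intro sum.cong refl) auto
    also have "\<dots> = Exs (1 - \<delta> k) {t. (t, k) \<in> ?I} (\<lambda>A. if w (d k) \<noteq> \<phi> k d (xs_of A (f d w)) (g k w) then 1 else 0)"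
      by (rule pattern_Exs[OF fI]) (use del in auto)
    finally show ?thesis unfolding TI .
  qed
  have "(\<Sum>w\<in>?L. (1 / real (card ?L)) *
     Exs (1 - \<delta> k) {..<n} (\<lambda>A. if w (d k) \<noteq> \<phi> k d (xs_of A (f d w)) (g k w) then 1 else 0)) =
     (1 / real (card ?L)) * (\<Sum>w\<in>?L. \<Sum>e\<in>erasure_patterns K n. pattern_prob \<delta> K n e *
        (if \<phi> k d (channel_output n (f d w) e k) (g k w) \<noteq> w (d k) then 1 else 0))"
    unfolding inner sum_distrib_left by simp
  also have "\<dots> \<le> (1 / real (card ?L)) * (\<Sum>w\<in>?L. \<Sum>e\<in>erasure_patterns K n. pattern_prob \<delta> K n e *
        (if \<exists>k\<in>{1..K}. \<phi> k d (channel_output n (f d w) e k) (g k w) \<noteq> w (d k) then 1 else 0))"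
    using k pp0 by (intro mult_left_mono sum_mono mult_left_mono) auto
  also have "\<dots> = error_prob \<delta> K D n R g f \<phi> d"
    unfolding error_prob_def by simp
  finally show ?thesis .
qed


locale conv =
  fixes F K D n :: nat and R :: real and \<delta> M :: "nat \<Rightarrow> real"
    and g :: "nat \<Rightarrow> (nat \<Rightarrow> nat) \<Rightarrow> nat" and f :: "(nat \<Rightarrow> nat) \<Rightarrow> (nat \<Rightarrow> nat) \<Rightarrow> nat \<Rightarrow> bool list"
    and \<phi> :: "nat \<Rightarrow> (nat \<Rightarrow> nat) \<Rightarrow> (nat \<Rightarrow> bool list option) \<Rightarrow> nat \<Rightarrow> nat"
    and S :: "nat set" and \<epsilon> :: real
  assumes S_sub: "S \<subseteq> {1..K}" and S_ne: "S \<noteq> {}" and DK: "K \<le> D"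
    and del: "\<forall>k\<in>{1..K}. 0 \<le> \<delta> k \<and> \<delta> k < 1" and Mnn: "\<forall>k\<in>{1..K}. 0 \<le> M k"
    and m1: "1 \<le> msg_count n R" and vc: "valid_code F K D M n R g f"
    and err: "\<forall>d\<in>demands K D. error_prob \<delta> K D n R g f \<phi> d < \<epsilon>"
begin

definition "L = library D n R"
definition "m = msg_count n R"
definition "p0 = (\<lambda>_::nat\<Rightarrow>nat. 1 / real (card L))"
definition "xs = sort_key \<delta> (sorted_list_of_set S)"
definition "s = length xs"
definition "u i = xs ! i"
definition "idx k = (THE i. i < s \<and> xs ! i = k)"
definition "dj j = restrict (\<lambda>k. if k \<in> S then (idx k + j) mod D + 1 else 1) {1..K}"
definition "V w = restrict (\<lambda>k. g k w) S"
definition "Ff j i = (\<lambda>i'. (i' + j) mod D + 1) ` {i..<s}"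
definition "qq i = 1 - \<delta> (u i)"
definition "cc i = 1 / qq i"
definition "Ua j i w = (V w, restrict w (Ff j i))"
definition "aa j i x = Psi L p0 (f (dj j)) n (qq i) (Ua j x)"

lemma finS: "finite S" using S_sub finite_subset by blast

lemma set_xs: "set xs = S" unfolding xs_def using finS by simp
lemma dist_xs: "distinct xs" unfolding xs_def using finS by simp
lemma s_card: "s = card S" unfolding s_def using distinct_card[OF dist_xs] set_xs by simp
lemma s_pos: "0 < s" using s_card finS S_ne by (simp add: card_gt_0_iff)
lemma s_le_K: "s \<le> K" using s_card S_sub card_mono[of "{1..K}" S] by simp
lemma s_le_D: "s \<le> D" using s_le_K DK by simp
lemma D_pos: "0 < D" using s_pos s_le_D by simp

lemma u_S: "i < s \<Longrightarrow> u i \<in> S" unfolding u_def s_def using set_xs nth_mem by blast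
lemma u_K: "i < s \<Longrightarrow> u i \<in> {1..K}" using u_S S_sub by blast

lemma u_mono: "i \<le> i' \<Longrightarrow> i' < s \<Longrightarrow> \<delta> (u i) \<le> \<delta> (u i')"
proof -
  assume a: "i \<le> i'" "i' < s"
  have "sorted (map \<delta> xs)" unfolding xs_def by simp
  then have "map \<delta> xs ! i \<le> map \<delta> xs ! i'" using a unfolding s_def
    by (intro sorted_nth_mono) auto
  then show ?thesis using a unfolding u_def s_def by simp
qed

lemma idx_u: "i < s \<Longrightarrow> idx (u i) = i"
  unfolding idx_def u_def
  by (rule the_equality) (use dist_xs in \<open>auto simp: s_def nth_eq_iff_index_eq\<close>)

lemma dj_u: "i < s \<Longrightarrow> dj j (u i) = (i + j) mod D + 1"
  unfolding dj_def using u_S u_K idx_u by simp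

lemma dj_dem: "dj j \<in> demands K D"
  unfolding demands_def dj_def using D_pos by (auto simp: PiE_iff Suc_le_eq)

lemma Ff_insert: "i < s \<Longrightarrow> Ff j i = insert ((i + j) mod D + 1) (Ff j (Suc i))"
proof -
  assume "i < s"
  then have "{i..<s} = insert i {Suc i..<s}" by auto
  then show ?thesis unfolding Ff_def by simp
qed

lemma Ff_notin: "i < s \<Longrightarrow> (i + j) mod D + 1 \<notin> Ff j (Suc i)"
proof
  assume i: "i < s" and "(i + j) mod D + 1 \<in> Ff j (Suc i)"
  then obtain i' where i': "i' \<in> {Suc i..<s}" "(i + j) mod D + 1 = (i' + j) mod D + 1"
    unfolding Ff_def by auto
  then have "i = i'" using mod_shift_inj[of i D i' j] i s_le_D by simp
  then show False using i' by simp
qed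

lemma Ff_s: "Ff j s = {}" unfolding Ff_def by simp

lemma Ff_sub: "Ff j i \<subseteq> {1..D}" unfolding Ff_def using D_pos by (auto simp: Suc_le_eq)

lemma finL: "finite L" unfolding L_def library_def by (simp add: finite_PiE)

lemma card_L: "card L = m ^ D"
  unfolding L_def library_def m_def by (simp add: card_PiE)

lemma m_pos: "1 \<le> m" using m1 unfolding m_def .

lemma L_ne: "L \<noteq> {}" using card_L m_pos finL by auto

lemma fd: "fdist L p0"
proof
  show "finite L" by (rule finL)
  show "0 \<le> p0 w" for w unfolding p0_def by simp
  show "sum p0 L = 1" unfolding p0_def using L_ne finL by simp
qed

lemma qq_pos: "i < s \<Longrightarrow> 0 < qq i" unfolding qq_def using del u_K by force
lemma qq_le1: "i < s \<Longrightarrow> qq i \<le> 1" unfolding qq_def using del u_K by force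
lemma cc_pos: "i < s \<Longrightarrow> 0 < cc i" unfolding cc_def using qq_pos by simp

lemma Ua_eq: "Ua j x = (\<lambda>w. (V w, restrict w (Ff j x)))"
  by (simp add: fun_eq_iff Ua_def)

lemma m_img: "d \<in> {1..D} \<Longrightarrow> card ((\<lambda>w. w d) ` L) \<le> m"
proof -
  assume d: "d \<in> {1..D}"
  have "(\<lambda>w. w d) ` L \<subseteq> {1..m}" using d unfolding L_def library_def m_def by (auto simp: PiE_iff)
  then show ?thesis using card_mono[of "{1..m}"] by fastforce
qed

lemma per_user_ji:
  assumes j: "j < D" and i: "i < s"
  shows "cc i * (fdist.hU L p0 V (\<lambda>w. w) (Ff j i) - fdist.hU L p0 V (\<lambda>w. w) (Ff j (Suc i)))
     \<le> aa j i (Suc i) - aa j i i + cc i * (ln 2 + \<epsilon> * ln (real m))"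
proof -
  interpret A: fdist L p0 by (rule fd)
  define k where "k = u i"
  define d where "d = dj j"
  define e where "e = (i + j) mod D + 1"
  have dk: "d k = e" unfolding d_def k_def e_def using dj_u[OF i] .
  have kS: "k \<in> S" unfolding k_def using u_S[OF i] .
  have kK: "k \<in> {1..K}" unfolding k_def using u_K[OF i] .
  have eD: "e \<in> {1..D}" unfolding e_def using D_pos by (auto simp: Suc_le_eq)
  have Fi: "Ff j i = insert e (Ff j (Suc i))" unfolding e_def using Ff_insert[OF i] .
  have q0: "0 \<le> qq i" "qq i \<le> 1" using qq_pos[OF i] qq_le1[OF i] by auto
  have pu: "A.cent (\<lambda>w. w (d k)) (Ua j (Suc i)) \<le>
     Exs (qq i) {..<n} (\<lambda>A. A.cent (\<lambda>w. xs_of A (f d w)) (Ua j (Suc i))) -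
     Exs (qq i) {..<n} (\<lambda>A. A.cent (\<lambda>w. xs_of A (f d w)) (Ua j i)) + ln 2 +
     (\<Sum>w\<in>L. p0 w * Exs (qq i) {..<n} (\<lambda>A. if w (d k) \<noteq> (\<lambda>y uu. \<phi> k d y (fst uu k)) (xs_of A (f d w)) (Ua j (Suc i) w) then 1 else 0)) *
       ln (real (card ((\<lambda>w. w (d k)) ` L)))"
  proof (rule per_user[OF fd _ q0])
    fix w w' assume "w \<in> L" "w' \<in> L"
    show "(w' (d k) = w (d k) \<and> Ua j (Suc i) w' = Ua j (Suc i) w) = (Ua j i w' = Ua j i w)"
      unfolding Ua_def dk Fi by (auto simp only: A.restrict_insert_eq prod.inject)
  qed simp
  have lhs: "A.cent (\<lambda>w. w (d k)) (Ua j (Suc i)) = A.hU V (\<lambda>w. w) (Ff j i) - A.hU V (\<lambda>w. w) (Ff j (Suc i))"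
    unfolding dk Ua_eq Fi by (rule A.hU_insert)
  have ex1: "Exs (qq i) {..<n} (\<lambda>A. A.cent (\<lambda>w. xs_of A (f d w)) (Ua j x)) = qq i * aa j i x" for x
    unfolding aa_def d_def by (rule Exs_chain[OF fd])
  define Pe where "Pe = (\<Sum>w\<in>L. p0 w * Exs (qq i) {..<n} (\<lambda>A. if w (d k) \<noteq> (\<lambda>y uu. \<phi> k d y (fst uu k)) (xs_of A (f d w)) (Ua j (Suc i) w) then 1 else 0))"
  have Pe_eq: "Pe = (\<Sum>w\<in>library D n R. (1 / real (card (library D n R))) *
     Exs (1 - \<delta> k) {..<n} (\<lambda>A. if w (d k) \<noteq> \<phi> k d (xs_of A (f d w)) (g k w) then 1 else 0))"
    unfolding Pe_def p0_def L_def qq_def k_def[symmetric] Ua_def V_def using kS by simp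
  have Pe_le: "Pe \<le> error_prob \<delta> K D n R g f \<phi> d"
    unfolding Pe_eq by (rule err_link[OF kK]) (use del in auto)
  have "error_prob \<delta> K D n R g f \<phi> d < \<epsilon>" using err dj_dem[of j] unfolding d_def by blast
  then have Pe_lt: "Pe < \<epsilon>" using Pe_le by linarith
  have Pe0: "0 \<le> Pe" unfolding Pe_def p0_def
    by (intro sum_nonneg mult_nonneg_nonneg Exs_nonneg q0) auto
  have lc0: "0 < card ((\<lambda>w. w (d k)) ` L)" using L_ne finL by (auto simp: card_gt_0_iff)
  have lcm: "card ((\<lambda>w. w (d k)) ` L) \<le> m" unfolding dk by (rule m_img[OF eD])
  have lnc: "0 \<le> ln (real (card ((\<lambda>w. w (d k)) ` L)))" "ln (real (card ((\<lambda>w. w (d k)) ` L))) \<le> ln (real m)"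
    using lc0 lcm by auto
  have "Pe * ln (real (card ((\<lambda>w. w (d k)) ` L))) \<le> \<epsilon> * ln (real m)"
  proof -
    have "Pe * ln (real (card ((\<lambda>w. w (d k)) ` L))) \<le> \<epsilon> * ln (real (card ((\<lambda>w. w (d k)) ` L)))"
      using Pe_lt lnc by (intro mult_right_mono) auto
    also have "\<dots> \<le> \<epsilon> * ln (real m)" using lnc Pe0 Pe_lt by (intro mult_left_mono) auto
    finally show ?thesis .
  qed
  then have main: "A.hU V (\<lambda>w. w) (Ff j i) - A.hU V (\<lambda>w. w) (Ff j (Suc i)) \<le>
      qq i * (aa j i (Suc i) - aa j i i) + (ln 2 + \<epsilon> * ln (real m))"
    using pu unfolding lhs ex1 Pe_def[symmetric] by (simp add: algebra_simps)
  have "cc i * (A.hU V (\<lambda>w. w) (Ff j i) - A.hU V (\<lambda>w. w) (Ff j (Suc i))) \<le>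
      cc i * (qq i * (aa j i (Suc i) - aa j i i) + (ln 2 + \<epsilon> * ln (real m)))"
    using main cc_pos[OF i] by (intro mult_left_mono) auto
  also have "\<dots> = aa j i (Suc i) - aa j i i + cc i * (ln 2 + \<epsilon> * ln (real m))"
    using qq_pos[OF i] unfolding cc_def by (simp add: algebra_simps)
  finally show ?thesis .
qed

lemma X_card: "d \<in> demands K D \<Longrightarrow> t < n \<Longrightarrow> card ((\<lambda>w. f d w t) ` L) \<le> 2 ^ F"
proof -
  assume d: "d \<in> demands K D" and t: "t < n"
  have "(\<lambda>w. f d w t) ` L \<subseteq> {xs. set xs \<subseteq> (UNIV :: bool set) \<and> length xs = F}"
    using vc d t unfolding valid_code_def L_def by auto
  moreover have "card {xs. set xs \<subseteq> (UNIV :: bool set) \<and> length xs = F} = 2 ^ F"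
    using card_lists_length_eq[of "UNIV :: bool set" F] by simp
  moreover have "finite {xs. set xs \<subseteq> (UNIV :: bool set) \<and> length xs = F}"
    using finite_lists_length_eq[of "UNIV :: bool set" F] by simp
  ultimately show ?thesis by (metis card_mono)
qed

lemma per_j:
  assumes j: "j < D"
  shows "(\<Sum>i<s. cc i * (fdist.hU L p0 V (\<lambda>w. w) (Ff j i) - fdist.hU L p0 V (\<lambda>w. w) (Ff j (Suc i))))
     \<le> real n * (real F * ln 2) + (\<Sum>i<s. cc i) * (ln 2 + \<epsilon> * ln (real m))"
proof -
  have t1: "(\<Sum>i<s. cc i * (fdist.hU L p0 V (\<lambda>w. w) (Ff j i) - fdist.hU L p0 V (\<lambda>w. w) (Ff j (Suc i))))
     \<le> (\<Sum>i<s. (aa j i (Suc i) - aa j i i) + cc i * (ln 2 + \<epsilon> * ln (real m)))"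
    using per_user_ji[OF j] by (intro sum_mono) auto
  also have "\<dots> = (\<Sum>i<s. aa j i (Suc i) - aa j i i) + (\<Sum>i<s. cc i) * (ln 2 + \<epsilon> * ln (real m))"
    by (simp add: sum.distrib sum_distrib_right)
  finally have t1': "(\<Sum>i<s. cc i * (fdist.hU L p0 V (\<lambda>w. w) (Ff j i) - fdist.hU L p0 V (\<lambda>w. w) (Ff j (Suc i))))
     \<le> (\<Sum>i<s. aa j i (Suc i) - aa j i i) + (\<Sum>i<s. cc i) * (ln 2 + \<epsilon> * ln (real m))" .
  have t2: "(\<Sum>i<s. aa j i (Suc i) - aa j i i) \<le> aa j (s - 1) s - aa j 0 0"
  proof (rule tele[OF _ s_pos])
    fix i assume i: "Suc i < s"
    have "qq (Suc i) \<le> qq i" unfolding qq_def using u_mono[of i "Suc i"] i by simp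
    then show "aa j i (Suc i) \<le> aa j (Suc i) (Suc i)"
      unfolding aa_def using qq_pos[of "Suc i"] qq_le1[of i] i
      by (intro Psi_antitone[OF fd]) auto
  qed
  have t3: "aa j (s - 1) s \<le> real n * ln (real (2 ^ F))"
    unfolding aa_def using s_pos qq_pos[of "s - 1"] qq_le1[of "s - 1"]
    by (intro Psi_le[OF fd] X_card[OF dj_dem]) auto
  have t4: "0 \<le> aa j 0 0"
    unfolding aa_def using s_pos qq_pos[of 0] qq_le1[of 0]
    by (intro Psi_nonneg[OF fd]) auto
  have "ln (real (2 ^ F)) = real F * ln 2" by (simp add: ln_realpow)
  then show ?thesis using t1' t2 t3 t4 by simp
qed

lemma sumcc: "(\<Sum>i<s. cc i) = (\<Sum>k\<in>S. 1 / (1 - \<delta> k))"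
proof -
  have inj: "inj_on (nth xs) {..<s}" using dist_xs by (intro inj_on_nth) (auto simp: s_def)
  have img: "nth xs ` {..<s} = S" using set_xs by (auto simp: s_def set_conv_nth)
  have "(\<Sum>i<s. 1 / (1 - \<delta> (xs ! i))) = (\<Sum>k\<in>nth xs ` {..<s}. 1 / (1 - \<delta> k))"
    by (simp add: sum.reindex[OF inj])
  also have "\<dots> = (\<Sum>k\<in>S. 1 / (1 - \<delta> k))" by (simp only: img)
  finally show ?thesis unfolding cc_def qq_def u_def by simp
qed

lemma H_full: "fdist.hU L p0 V (\<lambda>w. w) {1..D} = real D * ln (real m)"
proof -
  interpret A: fdist L p0 by (rule fd)
  have "A.hU V (\<lambda>w. w) {1..D} = ln (real (card L))"
    unfolding A.hU_def
  proof (rule A.ent_uniform_inj)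
    show "p0 w = 1 / real (card L)" for w unfolding p0_def by simp
    show "inj_on (\<lambda>w. (V w, restrict w {1..D})) L"
      unfolding inj_on_def L_def library_def by auto
  qed
  then show ?thesis unfolding card_L by (simp add: ln_realpow)
qed

lemma H_empty: "fdist.hU L p0 V (\<lambda>w. w) {} \<le> real n * (\<Sum>k\<in>S. M k) * ln 2"
proof -
  interpret A: fdist L p0 by (rule fd)
  define N where "N k = nat \<lfloor>2 powr (real n * M k)\<rfloor>" for k
  have N1: "k \<in> S \<Longrightarrow> 1 \<le> N k" for k
  proof -
    assume "k \<in> S"
    then have "0 \<le> M k" using Mnn S_sub by auto
    then have "1 \<le> 2 powr (real n * M k)" by (intro ge_one_powr_ge_zero) auto
    then show ?thesis unfolding N_def by linarith
  qed
  have NM: "k \<in> S \<Longrightarrow> ln (real (N k)) \<le> real n * M k * ln 2" for k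
  proof -
    assume k: "k \<in> S"
    have "real (N k) \<le> 2 powr (real n * M k)" unfolding N_def
      using N1[OF k] unfolding N_def by linarith
    then have "ln (real (N k)) \<le> ln (2 powr (real n * M k))"
      by (subst ln_le_cancel_iff) (use N1[OF k] in auto)
    also have "ln (2 powr (real n * M k)) = real n * M k * ln 2" by (simp add: ln_powr)
    finally show ?thesis .
  qed
  have img: "(\<lambda>w. (V w, restrict w {})) ` L = (\<lambda>v. (v, \<lambda>_. undefined)) ` (V ` L)"
    by (auto simp: restrict_def image_iff)
  have VL: "V ` L \<subseteq> PiE S (\<lambda>k. {1..N k})"
    using vc S_sub unfolding valid_code_def V_def L_def N_def by (auto simp: PiE_iff subset_iff)
  have "card ((\<lambda>w. (V w, restrict w {})) ` L) \<le> card (V ` L)"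
    unfolding img by (rule card_image_le) (use finL in simp)
  also have "\<dots> \<le> card (PiE S (\<lambda>k. {1..N k}))"
    using VL finS by (intro card_mono) (auto simp: finite_PiE)
  also have "\<dots> = (\<Prod>k\<in>S. N k)" using finS by (simp add: card_PiE)
  finally have c1: "card ((\<lambda>w. (V w, restrict w {})) ` L) \<le> (\<Prod>k\<in>S. N k)" .
  have c0: "0 < card ((\<lambda>w. (V w, restrict w {})) ` L)" using L_ne finL by (auto simp: card_gt_0_iff)
  have "A.hU V (\<lambda>w. w) {} \<le> ln (real (card ((\<lambda>w. (V w, restrict w {})) ` L)))"
    unfolding A.hU_def by (rule A.ent_le_card)
  also have "\<dots> \<le> ln (real (\<Prod>k\<in>S. N k))"
  proof -
    have "real (card ((\<lambda>w. (V w, restrict w {})) ` L)) \<le> real (\<Prod>k\<in>S. N k)" using c1 by linarith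
    then show ?thesis using c0 by (subst ln_le_cancel_iff) auto
  qed
  also have "\<dots> = (\<Sum>k\<in>S. ln (real (N k)))"
  proof -
    have "real (\<Prod>k\<in>S. N k) = (\<Prod>k\<in>S. real (N k))" by simp
    also have "ln \<dots> = (\<Sum>k\<in>S. ln (real (N k)))"
      using finS N1 by (intro ln_prod) force+
    finally show ?thesis .
  qed
  also have "\<dots> \<le> (\<Sum>k\<in>S. real n * M k * ln 2)" using NM by (intro sum_mono) auto
  also have "\<dots> = real n * (\<Sum>k\<in>S. M k) * ln 2"
    by (simp add: sum_distrib_left sum_distrib_right)
  finally show ?thesis .
qed

lemma Delta_nonneg: "i < s \<Longrightarrow> 0 \<le> cc i - (if i = 0 then 0 else cc (i - 1))"
proof -
  assume i: "i < s"
  show ?thesis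
  proof (cases "i = 0")
    case True then show ?thesis using cc_pos[OF i] by simp
  next
    case False
    have "qq i \<le> qq (i - 1)" unfolding qq_def using u_mono[of "i - 1" i] i by simp
    then have "cc (i - 1) \<le> cc i" unfolding cc_def using qq_pos[OF i]
      by (simp add: frac_le)
    then show ?thesis using False by simp
  qed
qed

lemma final_ineq:
  "(1 - \<epsilon>) * ln (real m) \<le>
     ln 2 * (real n * (real F / (\<Sum>k\<in>S. 1 / (1 - \<delta> k)) + (\<Sum>k\<in>S. M k) / real D) + 1)"
proof -
  interpret A: fdist L p0 by (rule fd)
  define H where "H F' = A.hU V (\<lambda>w. w) F'" for F'
  define Dl where "Dl i = cc i - (if i = 0 then 0 else cc (i - 1))" for i
  define h where "h j i = H (Ff j i) - H {}" for j i
  define C where "C = (\<Sum>k\<in>S. 1 / (1 - \<delta> k))"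
  define MS where "MS = (\<Sum>k\<in>S. M k)"
  define RHS where "RHS = real n * (real F * ln 2) + C * (ln 2 + \<epsilon> * ln (real m))"
  define a where "a x = A.cent (\<lambda>w. w x) (\<lambda>w. (V w, restrict w ({1..D} \<inter> {..<x})))" for x
  define At where "At = (\<Sum>x\<in>{1..D}. a x)"
  have Cpos: "0 < C" unfolding C_def sumcc[symmetric] using cc_pos s_pos
    by (intro sum_pos) auto
  have pj: "(\<Sum>i<s. Dl i * h j i) \<le> RHS" if j: "j < D" for j
  proof -
    have "(\<Sum>i<s. cc i * (h j i - h j (Suc i))) =
        (\<Sum>i<s. Dl i * h j i) - (if s = 0 then 0 else cc (s - 1) * h j s)"
      unfolding Dl_def by (rule abel)
    moreover have "h j s = 0" unfolding h_def Ff_s by simp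
    moreover have "(\<Sum>i<s. cc i * (h j i - h j (Suc i))) \<le> RHS"
      using per_j[OF j] unfolding RHS_def C_def sumcc[symmetric] h_def H_def by simp
    ultimately show ?thesis by (simp split: if_splits)
  qed
  have "(\<Sum>j<D. \<Sum>i<s. Dl i * h j i) \<le> (\<Sum>j<D. RHS)" using pj by (intro sum_mono) auto
  then have s1: "(\<Sum>i<s. Dl i * (\<Sum>j<D. h j i)) \<le> real D * RHS"
    by (simp add: sum.swap[of _ "{..<D}"] sum_distrib_left)
  have low: "real (s - i) * At \<le> (\<Sum>j<D. h j i)" if i: "i < s" for i
  proof -
    have "(\<Sum>j<D. \<Sum>x\<in>Ff j i. a x) \<le> (\<Sum>j<D. h j i)"
    proof (rule sum_mono)
      fix j show "(\<Sum>x\<in>Ff j i. a x) \<le> h j i"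
        unfolding a_def h_def H_def by (rule A.hU_shearer[OF Ff_sub])
    qed
    moreover have "(\<Sum>j<D. \<Sum>x\<in>Ff j i. a x) = real (card {i..<s}) * At"
      unfolding Ff_def At_def using s_le_D by (intro cyclic_sum) auto
    ultimately show ?thesis by simp
  qed
  have "(\<Sum>i<s. Dl i * (real (s - i) * At)) \<le> (\<Sum>i<s. Dl i * (\<Sum>j<D. h j i))"
    using low Delta_nonneg unfolding Dl_def by (intro sum_mono mult_left_mono) auto
  moreover have "(\<Sum>i<s. Dl i * (real (s - i) * At)) = C * At"
  proof -
    have "(\<Sum>i<s. Dl i * (real (s - i) * At)) = (\<Sum>i<s. Dl i * real (s - i)) * At"
      by (simp add: sum_distrib_right mult.assoc)
    also have "(\<Sum>i<s. Dl i * real (s - i)) = C"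
      unfolding Dl_def C_def sumcc[symmetric] by (rule abel2)
    finally show ?thesis .
  qed
  ultimately have s2: "C * At \<le> real D * RHS" using s1 by simp
  have At_eq: "At = H {1..D} - H {}"
    unfolding At_def a_def H_def by (rule A.hU_full[symmetric])
  have At_ge: "real D * ln (real m) - real n * MS * ln 2 \<le> At"
    unfolding At_eq H_def MS_def using H_full H_empty by simp
  have key: "C * (real D * ln (real m) - real n * MS * ln 2) \<le> real D * RHS"
    using s2 At_ge Cpos by (meson mult_left_mono order.trans less_imp_le)
  have Dpos: "0 < real D" using D_pos by simp
  have "C * real D * ((1 - \<epsilon>) * ln (real m)) \<le> C * real D * (ln 2 * (real n * (real F / C + MS / real D) + 1))"
  proof -
    have "C * real D * (ln 2 * (real n * (real F / C + MS / real D) + 1)) =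
        ln 2 * (real D * real n * real F + C * real n * MS + C * real D)"
      using Cpos Dpos by (simp add: field_simps)
    moreover have "C * real D * ((1 - \<epsilon>) * ln (real m)) \<le> ln 2 * (real D * real n * real F + C * real n * MS + C * real D)"
      using key unfolding RHS_def by (simp add: algebra_simps)
    ultimately show ?thesis by linarith
  qed
  then have "(1 - \<epsilon>) * ln (real m) \<le> ln 2 * (real n * (real F / C + MS / real D) + 1)"
    using Cpos Dpos by (simp add: mult_le_cancel_left_pos)
  then show ?thesis unfolding C_def MS_def .
qed

end


lemma ln_msg_count:
  assumes "0 \<le> R"
  shows "(real n * R - 1) * ln 2 \<le> ln (real (msg_count n R))" and "1 \<le> msg_count n R"
proof -
  define x where "x = 2 powr (real n * R)"
  have x1: "1 \<le> x" unfolding x_def using assms by (intro ge_one_powr_ge_zero) auto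
  have m: "msg_count n R = nat \<lfloor>x\<rfloor>" unfolding msg_count_def x_def ..
  show "1 \<le> msg_count n R" unfolding m using x1 by linarith
  have fl: "1 \<le> \<lfloor>x\<rfloor>" using x1 by linarith
  then have "real (nat \<lfloor>x\<rfloor>) = real_of_int \<lfloor>x\<rfloor>" by simp
  moreover have "x < real_of_int \<lfloor>x\<rfloor> + 1" by linarith
  ultimately have "x / 2 \<le> real (nat \<lfloor>x\<rfloor>)" using fl by linarith
  moreover have "0 < x / 2" using x1 by simp
  moreover have "0 < real (nat \<lfloor>x\<rfloor>)" using fl by simp
  ultimately have "ln (x / 2) \<le> ln (real (nat \<lfloor>x\<rfloor>))" by (subst ln_le_cancel_iff) auto
  moreover have "ln (x / 2) = (real n * R - 1) * ln 2"
    unfolding x_def by (simp add: ln_div algebra_simps)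
  ultimately show "(real n * R - 1) * ln 2 \<le> ln (real (msg_count n R))" unfolding m by simp
qed

lemma bound_S:
  fixes K F D :: nat and \<delta> M :: "nat \<Rightarrow> real"
  assumes "K \<ge> 1" and "F \<ge> 1" and DK: "D \<ge> K"
    and del: "\<forall>k\<in>{1..K}. 0 \<le> \<delta> k \<and> \<delta> k < 1"
    and Mnn: "\<forall>k\<in>{1..K}. 0 \<le> M k"
    and S: "S \<subseteq> {1..K}" "S \<noteq> {}"
    and ach: "achievable F \<delta> K D M R"
  shows "R \<le> real F / (\<Sum>k\<in>S. 1 / (1 - \<delta> k)) + (\<Sum>k\<in>S. M k) / real D"
proof (rule ccontr)
  define B where "B = real F / (\<Sum>k\<in>S. 1 / (1 - \<delta> k)) + (\<Sum>k\<in>S. M k) / real D"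
  assume "\<not> R \<le> real F / (\<Sum>k\<in>S. 1 / (1 - \<delta> k)) + (\<Sum>k\<in>S. M k) / real D"
  then have RB: "B < R" unfolding B_def by simp
  have finS: "finite S" using S finite_subset by blast
  have C0: "0 \<le> (\<Sum>k\<in>S. 1 / (1 - \<delta> k))"
  proof (rule sum_nonneg)
    fix k assume "k \<in> S"
    then have "\<delta> k < 1" using del S by auto
    then show "0 \<le> 1 / (1 - \<delta> k)" by simp
  qed
  have M0: "0 \<le> (\<Sum>k\<in>S. M k)" using Mnn S by (intro sum_nonneg) auto
  have B0: "0 \<le> B" unfolding B_def using C0 M0 by simp
  have R0: "0 < R" using RB B0 by simp
  define \<epsilon> where "\<epsilon> = (R - B) / (2 * R)"
  have e0: "0 < \<epsilon>" unfolding \<epsilon>_def using RB R0 by simp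
  have e1: "\<epsilon> \<le> 1 / 2" unfolding \<epsilon>_def using RB R0 B0 by (simp add: field_simps)
  define N where "N = nat \<lceil>4 / (R - B)\<rceil> + 1"
  obtain n g f \<phi> where n: "n \<ge> N" and vc: "valid_code F K D M n R g f"
    and err: "\<forall>d\<in>demands K D. error_prob \<delta> K D n R g f \<phi> d < \<epsilon>"
    using ach e0 unfolding achievable_def by blast
  have m1: "1 \<le> msg_count n R" using ln_msg_count(2)[of R n] R0 by simp
  interpret conv F K D n R \<delta> M g f \<phi> S \<epsilon>
    using S DK del Mnn m1 vc err by unfold_locales auto
  have fi: "(1 - \<epsilon>) * ln (real m) \<le> ln 2 * (real n * B + 1)"
    using final_ineq unfolding B_def .
  have lm: "(real n * R - 1) * ln 2 \<le> ln (real m)"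
    unfolding m_def using ln_msg_count(1)[of R n] R0 by simp
  have "(1 - \<epsilon>) * ((real n * R - 1) * ln 2) \<le> (1 - \<epsilon>) * ln (real m)"
    using lm e1 by (intro mult_left_mono) auto
  then have "(1 - \<epsilon>) * (real n * R - 1) * ln 2 \<le> (real n * B + 1) * ln 2"
    using fi by (simp add: algebra_simps)
  then have ineq: "(1 - \<epsilon>) * (real n * R - 1) \<le> real n * B + 1"
    by simp
  have eqR: "(1 - \<epsilon>) * R = (R + B) / 2" unfolding \<epsilon>_def using R0 by (simp add: field_simps)
  have e2: "(1 - \<epsilon>) * (real n * R - 1) = real n * ((1 - \<epsilon>) * R) - (1 - \<epsilon>)" by (simp add: algebra_simps)
  have "real n * ((1 - \<epsilon>) * R) = real n * ((R + B) / 2)" using eqR by simp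
  then have h1: "real n * ((R + B) / 2) - (1 - \<epsilon>) \<le> real n * B + 1" using ineq e2 by linarith
  have "real n * (R - B) = 2 * (real n * ((R + B) / 2)) - 2 * (real n * B)" by (simp add: algebra_simps)
  then have "real n * (R - B) \<le> 4 - 2 * \<epsilon>" using h1 by linarith
  then have "real n * (R - B) \<le> 4" using e0 by simp
  then have "real n \<le> 4 / (R - B)" using RB by (simp add: field_simps)
  moreover have "4 / (R - B) < real N" unfolding N_def by linarith
  ultimately show False using n by simp
qed

lemma achievable_zero:
  assumes Mnn: "\<forall>k\<in>{1..K}. 0 \<le> M k"
  shows "achievable F \<delta> K D M 0"
  unfolding achievable_def
proof (intro allI impI)
  fix \<epsilon> :: real and N :: nat assume e: "0 < \<epsilon>"
  define g where "g = (\<lambda>(k::nat) (w::nat \<Rightarrow> nat). 1::nat)"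
  define f where "f = (\<lambda>(d::nat \<Rightarrow> nat) (w::nat \<Rightarrow> nat) (t::nat). replicate F False)"
  define \<phi> where "\<phi> = (\<lambda>(k::nat) (d::nat \<Rightarrow> nat) (y::nat \<Rightarrow> bool list option) (v::nat). 1::nat)"
  have vc: "valid_code F K D M N 0 g f"
    unfolding valid_code_def g_def f_def
  proof (intro conjI ballI allI impI)
    fix k assume k: "k \<in> {1..K}"
    have "1 \<le> 2 powr (real N * M k)" using Mnn k by (intro ge_one_powr_ge_zero) auto
    then show "1 \<in> {1..nat \<lfloor>2 powr (real N * M k)\<rfloor>}" by simp linarith
  qed simp
  have "error_prob \<delta> K D N 0 g f \<phi> d = 0" if d: "d \<in> demands K D" for d
  proof -
    have wk: "w (d k) = 1" if "w \<in> library D N 0" "k \<in> {1..K}" for w k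
      using that d unfolding library_def demands_def msg_count_def by (auto simp: PiE_iff)
    have "(\<Sum>w\<in>library D N 0. \<Sum>e\<in>erasure_patterns K N. pattern_prob \<delta> K N e *
        (if \<exists>k\<in>{1..K}. \<phi> k d (channel_output N (f d w) e k) (g k w) \<noteq> w (d k) then 1 else 0)) = 0"
    proof (intro sum.neutral ballI)
      fix w e assume w: "w \<in> library D N 0"
      have "\<not> (\<exists>k\<in>{1..K}. \<phi> k d (channel_output N (f d w) e k) (g k w) \<noteq> w (d k))"
        using wk[OF w] unfolding \<phi>_def by auto
      then show "pattern_prob \<delta> K N e *
        (if \<exists>k\<in>{1..K}. \<phi> k d (channel_output N (f d w) e k) (g k w) \<noteq> w (d k) then 1 else 0) = 0"
        by simp
    qed
    then show ?thesis unfolding error_prob_def by simp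
  qed
  then have "\<forall>d\<in>demands K D. error_prob \<delta> K D N 0 g f \<phi> d < \<epsilon>" using e by simp
  then show "\<exists>n\<ge>N. \<exists>g f \<phi>. valid_code F K D M n 0 g f \<and> (\<forall>d\<in>demands K D. error_prob \<delta> K D n 0 g f \<phi> d < \<epsilon>)"
    using vc by blast
qed

theorem corollary5:
  fixes K F D :: nat and \<delta> M :: "nat \<Rightarrow> real"
  assumes "K \<ge> 1" and "F \<ge> 1" and "D \<ge> K"
    and "\<forall>k\<in>{1..K}. 0 \<le> \<delta> k \<and> \<delta> k < 1"
    and "\<forall>k\<in>{1..K}. 0 \<le> M k"
  shows "capacity F \<delta> K D M \<le>
    Min ((\<lambda>S. real F / (\<Sum>k\<in>S. 1 / (1 - \<delta> k)) + (\<Sum>k\<in>S. M k) / real D)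
         ` {S. S \<subseteq> {1..K} \<and> S \<noteq> {}})"
proof -
  have fin: "finite {S. S \<subseteq> {1..K} \<and> S \<noteq> {}}" by (rule finite_subset[of _ "Pow {1..K}"]) auto
  have ne: "{S. S \<subseteq> {1..K} \<and> S \<noteq> {}} \<noteq> {}" using assms(1) by (auto intro!: exI[of _ "{1}"])
  have le: "capacity F \<delta> K D M \<le> real F / (\<Sum>k\<in>S. 1 / (1 - \<delta> k)) + (\<Sum>k\<in>S. M k) / real D"
    if S: "S \<subseteq> {1..K}" "S \<noteq> {}" for S
    unfolding capacity_def
  proof (rule cSup_least)
    show "{R. achievable F \<delta> K D M R} \<noteq> {}" using achievable_zero[OF assms(5)] by blast
    show "R \<le> real F / (\<Sum>k\<in>S. 1 / (1 - \<delta> k)) + (\<Sum>k\<in>S. M k) / real D"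
      if "R \<in> {R. achievable F \<delta> K D M R}" for R
      using bound_S[OF assms S] that by simp
  qed
  show ?thesis using fin ne le by (simp add: Min_ge_iff)
qed


end
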